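(* Assume $x(0)=x'(0)=0$ and additionally $p'(t)\to0$ as $t\to\infty$. Suppose $y_2(t)=o(1/A(t))$ and that there are constants $c_1,c_2$ with \[ x(t)=\frac{c_1\cos(\omega t)+c_2\sin(\omega t)}{A(t)}+o\Big(\frac1{A(t)}\Big)\quad(t\to\infty). \] Then the limits $\lim_{T\to\infty}\int_0^TA(t)\sin(\omega t)y_2(t)\,dt$ and $\lim_{T\to\infty}\int_0^TA(t)\cos(\omega t)y_2(t)\,dt$ exist and are finite.
   Context: Standing assumptions: $\omega>0$ is a constant; $p\in C^1([0,\infty))$ with $p(t)>0$ and $p'(t)<0$ for all $t\ge0$, $\int_0^\infty p(t)\,dt=\infty$ and $\int_0^\infty p(t)^2\,dt<\infty$; $f\in L^1_{\mathrm{loc}}([0,\infty))$. $x$ denotes the solution of $x''(t)+p(t)x'(t)+\omega^2x(t)=f(t)$, $t\ge0$. Notation: $A(t)=\exp(\frac12\int_0^tp(s)\,ds)$; $y_1(t)=\int_0^te^{-\omega^2(t-s)}f(s)\,ds$; $y_2(t)=\int_0^te^{-\omega^2(t-s)}y_1(s)\,ds=\int_0^t(t-s)e^{-\omega^2(t-s)}f(s)\,ds$. *)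

theory Defs
  imports "HOL-Analysis.Analysis" "HOL-Library.Landau_Symbols"
begin

definition Afun :: "(real \<Rightarrow> real) \<Rightarrow> real \<Rightarrow> real" where
  "Afun p t = exp ((1/2) * integral {0..t} p)"

definition y1fun :: "real \<Rightarrow> (real \<Rightarrow> real) \<Rightarrow> real \<Rightarrow> real" where
  "y1fun \<omega> f t = integral {0..t} (\<lambda>s. exp (-(\<omega>^2) * (t - s)) * f s)"

definition y2fun :: "real \<Rightarrow> (real \<Rightarrow> real) \<Rightarrow> real \<Rightarrow> real" where
  "y2fun \<omega> f t = integral {0..t} (\<lambda>s. exp (-(\<omega>^2) * (t - s)) * y1fun \<omega> f s)"

end

theory Submission
  imports Defs
begin

lemma at_within_Icc_Ici:
  fixes t T :: real assumes "0 \<le> t" "t < T"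
  shows "at t within {0..T} = at t within {0..}"
  by (rule at_within_nhd[of t "{..<T}"]) (use assms in auto)

lemma deriv_integral_Ici:
  fixes g :: "real \<Rightarrow> real"
  assumes "continuous_on {0..} g" "0 \<le> t"
  shows "((\<lambda>t. integral {0..t} g) has_real_derivative g t) (at t within {0..})"
proof -
  have "continuous_on {0..t+1} g" using assms(1) by (rule continuous_on_subset) auto
  then have "((\<lambda>t. integral {0..t} g) has_real_derivative g t) (at t within {0..t+1})"
    by (rule integral_has_real_derivative) (use assms in auto)
  then show ?thesis using at_within_Icc_Ici[of t "t+1"] assms by simp
qed

lemma cont_Ici_from_Icc:
  fixes g :: "real \<Rightarrow> real"
  assumes "\<And>T. T \<ge> 0 \<Longrightarrow> continuous_on {0..T} g"
  shows "continuous_on {0..} g"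
  unfolding continuous_on_eq_continuous_within
proof
  fix t :: real assume t: "t \<in> {0..}"
  have "continuous (at t within {0..t+1}) g"
    using assms[of "t+1"] t by (auto simp: continuous_on_eq_continuous_within)
  then show "continuous (at t within {0..}) g" using at_within_Icc_Ici[of t "t+1"] t by simp
qed

locale ctx =
  fixes \<omega> :: real and p p' f x x' :: "real \<Rightarrow> real"
  assumes omega_pos: "\<omega> > 0"
    and p_deriv: "\<And>t. t \<ge> 0 \<Longrightarrow> (p has_real_derivative p' t) (at t within {0..})"
    and p'_cont: "continuous_on {0..} p'"
    and p_pos: "\<And>t. t \<ge> 0 \<Longrightarrow> p t > 0"
    and p'_neg: "\<And>t. t \<ge> 0 \<Longrightarrow> p' t < 0"
    and p_sq_int: "(\<lambda>t. (p t)^2) integrable_on {0..}"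
    and f_loc: "\<And>T. T \<ge> 0 \<Longrightarrow> f absolutely_integrable_on {0..T}"
    and x_deriv: "\<And>t. t \<ge> 0 \<Longrightarrow> (x has_real_derivative x' t) (at t within {0..})"
    and x'_eq: "\<And>t. t \<ge> 0 \<Longrightarrow>
        ((\<lambda>s. f s - p s * x' s - \<omega>^2 * x s) has_integral x' t) {0..t}"
    and x0: "x 0 = 0"
begin

lemma p_cont: "continuous_on {0..} p"
  unfolding continuous_on_eq_continuous_within
  using p_deriv DERIV_continuous by (metis atLeast_iff)

lemma x_cont: "continuous_on {0..} x"
  unfolding continuous_on_eq_continuous_within
  using x_deriv DERIV_continuous by (metis atLeast_iff)

lemma p_ftc:
  assumes "0 \<le> s" "s \<le> t"
  shows "(p' has_integral (p t - p s)) {s..t}"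
proof (rule fundamental_theorem_of_calculus[OF assms(2)])
  fix r assume r: "r \<in> {s..t}"
  then have "(p has_real_derivative p' r) (at r within {s..t})"
    using p_deriv[of r] assms by (auto intro: has_field_derivative_subset)
  then show "(p has_vector_derivative p' r) (at r within {s..t})"
    by (simp add: has_real_derivative_iff_has_vector_derivative)
qed

lemma p_mono: assumes "0 \<le> s" "s \<le> t" shows "p t \<le> p s"
proof -
  have "((\<lambda>r. - p' r) has_integral -(p t - p s)) {s..t}"
    using has_integral_neg[OF p_ftc[OF assms]] by simp
  then have "0 \<le> -(p t - p s)"
  proof (rule has_integral_nonneg)
    fix r assume "r \<in> {s..t}" then have "p' r < 0" using p'_neg assms by auto
    then show "0 \<le> - p' r" by simp
  qed
  then show ?thesis by simp
qed

lemma p_lim: "(p \<longlongrightarrow> 0) at_top"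
proof -
  have small: "\<exists>t\<ge>0. p t < e" if e: "e > 0" for e
  proof (rule ccontr)
    assume "\<not> ?thesis"
    then have ge: "\<And>t. t \<ge> 0 \<Longrightarrow> p t \<ge> e" by force
    define I where "I = integral {0..} (\<lambda>t. (p t)^2)"
    define T where "T = (\<bar>I\<bar> + 1) / e^2"
    have T0: "T \<ge> 0" using e by (simp add: T_def)
    have cont: "continuous_on {0..T} (\<lambda>t. (p t)^2)"
      by (intro continuous_intros continuous_on_subset[OF p_cont]) auto
    have "integral {0..T} (\<lambda>t. e^2) \<le> integral {0..T} (\<lambda>t. (p t)^2)"
    proof (rule integral_le)
      show "(\<lambda>t. (p t)^2) integrable_on {0..T}" using cont integrable_continuous_interval by blast
      show "\<And>t. t \<in> {0..T} \<Longrightarrow> e^2 \<le> (p t)^2"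
        using ge e by (auto intro!: power_mono)
    qed auto
    also have "\<dots> \<le> I" unfolding I_def
      by (rule integral_subset_le) (use cont integrable_continuous_interval p_sq_int in auto)
    finally have "T * e^2 \<le> I" using T0 by simp
    moreover have "T * e^2 = \<bar>I\<bar> + 1" using e by (simp add: T_def)
    ultimately show False by linarith
  qed
  show ?thesis
  proof (rule tendstoI)
    fix e :: real assume e: "e > 0"
    obtain t0 where t0: "t0 \<ge> 0" "p t0 < e" using small[OF e] by blast
    show "\<forall>\<^sub>F t in at_top. dist (p t) 0 < e"
      unfolding eventually_at_top_linorder
    proof (intro exI[of _ t0] allI impI)
      fix t assume "t0 \<le> t"
      then have "p t \<le> p t0" "p t > 0" using p_mono[of t0 t] p_pos[of t] t0 by auto
      then show "dist (p t) 0 < e" using t0 by (simp add: dist_real_def)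
    qed
  qed
qed

end

context ctx begin

definition k :: "real \<Rightarrow> real" where "k t = \<omega>^2 - p t / 2"
definition E :: "real \<Rightarrow> real" where "E t = Afun p t * exp (-(\<omega>^2) * t)"
definition Rw :: "(real \<Rightarrow> real) \<Rightarrow> real \<Rightarrow> real" where
  "Rw v t = E t * integral {0..t} (\<lambda>s. v s / E s)"

lemma A_pos: "Afun p t > 0" by (simp add: Afun_def)
lemma A0: "Afun p 0 = 1" by (simp add: Afun_def)
lemma E_pos: "E t > 0" by (simp add: E_def A_pos)
lemma E0: "E 0 = 1" by (simp add: E_def A0)

lemma A_deriv: assumes "t \<ge> 0"
  shows "(Afun p has_real_derivative (p t / 2 * Afun p t)) (at t within {0..})"
proof -
  have "((\<lambda>t. exp ((1/2) * integral {0..t} p)) has_real_derivative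
      exp ((1/2) * integral {0..t} p) * ((1/2) * p t)) (at t within {0..})"
    using deriv_integral_Ici[OF p_cont assms] by (intro derivative_eq_intros) auto
  then show ?thesis unfolding Afun_def[abs_def] by (rule DERIV_cong) (simp add: Afun_def)
qed

lemma E_deriv: assumes "t \<ge> 0"
  shows "(E has_real_derivative (- k t * E t)) (at t within {0..})"
proof -
  have "((\<lambda>t. Afun p t * exp (-(\<omega>^2) * t)) has_real_derivative
     (p t / 2 * Afun p t) * exp (-(\<omega>^2) * t) + (exp (-(\<omega>^2) * t) * (-(\<omega>^2))) * Afun p t) (at t within {0..})"
    using A_deriv[OF assms] by (intro derivative_eq_intros) auto
  then show ?thesis unfolding E_def[abs_def] by (rule DERIV_cong) (simp add: E_def k_def algebra_simps)
qed

lemma E_cont: "continuous_on {0..} E"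
  unfolding continuous_on_eq_continuous_within
  using E_deriv DERIV_continuous by (metis atLeast_iff)

lemma A_cont: "continuous_on {0..} (Afun p)"
  unfolding continuous_on_eq_continuous_within
  using A_deriv DERIV_continuous by (metis atLeast_iff)

lemma k_cont: "continuous_on {0..} k"
  unfolding k_def[abs_def] by (intro continuous_intros p_cont) auto

lemma cont_div_E: "continuous_on {0..} v \<Longrightarrow> continuous_on {0..} (\<lambda>s. v s / E s)"
  by (intro continuous_intros E_cont) (use E_pos in \<open>auto simp: less_le\<close>)

lemma integrable_Ici: "continuous_on {0..} v \<Longrightarrow> v integrable_on {a..b}" if "a \<ge> 0" for v :: "real \<Rightarrow> real"
  by (rule integrable_continuous_interval, erule continuous_on_subset) (use that in auto)

lemma Rw_deriv:
  assumes v: "continuous_on {0..} v" and t: "t \<ge> 0"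
  shows "(Rw v has_real_derivative (v t - k t * Rw v t)) (at t within {0..})"
proof -
  have "((\<lambda>t. E t * integral {0..t} (\<lambda>s. v s / E s)) has_real_derivative
      (- k t * E t) * integral {0..t} (\<lambda>s. v s / E s) + (v t / E t) * E t) (at t within {0..})"
    by (intro DERIV_mult E_deriv t deriv_integral_Ici cont_div_E v)
  then show ?thesis unfolding Rw_def[abs_def] by (rule DERIV_cong) (use E_pos[of t] in \<open>simp add: Rw_def\<close>)
qed

lemma Rw_cont: "continuous_on {0..} v \<Longrightarrow> continuous_on {0..} (Rw v)"
  unfolding continuous_on_eq_continuous_within
  using Rw_deriv DERIV_continuous by (metis atLeast_iff continuous_on_eq_continuous_within)

lemma Rw0: "Rw v 0 = 0" by (simp add: Rw_def)

lemma Rw_unique: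
  assumes v: "continuous_on {0..} v"
    and Z: "\<And>t. t \<ge> 0 \<Longrightarrow> (Z has_real_derivative (v t - k t * Z t)) (at t within {0..})"
    and t: "t \<ge> 0"
  shows "Z t = Z 0 * E t + Rw v t"
proof -
  define D where "D s = Z s / E s - integral {0..s} (\<lambda>r. v r / E r)" for s
  have "(D has_real_derivative 0) (at s within {0..})" if s: "s \<in> {0..}" for s
  proof -
    have "((\<lambda>s. Z s / E s - integral {0..s} (\<lambda>r. v r / E r)) has_real_derivative
       ((v s - k s * Z s) * E s - (- k s * E s) * Z s) / (E s)^Suc (Suc 0) - v s / E s) (at s within {0..})"
      using s E_pos[of s] by (intro DERIV_diff DERIV_quotient Z E_deriv deriv_integral_Ici cont_div_E v) auto
    then show ?thesis unfolding D_def[abs_def] by (rule DERIV_cong) (use E_pos[of s] in \<open>simp add: field_simps power2_eq_square\<close>)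
  qed
  then obtain c where c: "\<And>s. s \<in> {0..} \<Longrightarrow> D s = c"
    using has_field_derivative_zero_constant[of "{0::real..}" D] by (auto simp: convex_real_interval)
  have "D t = D 0" using c[of t] c[of 0] t by simp
  then have "Z t / E t = Z 0 + integral {0..t} (\<lambda>r. v r / E r)"
    by (simp add: D_def E0)
  then show ?thesis using E_pos[of t] by (simp add: Rw_def field_simps)
qed

lemma Rw_add: "continuous_on {0..} v \<Longrightarrow> continuous_on {0..} w \<Longrightarrow> t \<ge> 0 \<Longrightarrow>
   Rw (\<lambda>s. v s + w s) t = Rw v t + Rw w t"
  unfolding Rw_def add_divide_distrib
  by (subst integral_add) (auto intro!: integrable_Ici cont_div_E simp: distrib_left)

lemma Rw_diff: "continuous_on {0..} v \<Longrightarrow> continuous_on {0..} w \<Longrightarrow> t \<ge> 0 \<Longrightarrow>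
   Rw (\<lambda>s. v s - w s) t = Rw v t - Rw w t"
  unfolding Rw_def diff_divide_distrib
  by (subst integral_diff) (auto intro!: integrable_Ici cont_div_E simp: right_diff_distrib)

lemma Rw_cmult: "Rw (\<lambda>s. c * v s) t = c * Rw v t"
  unfolding Rw_def times_divide_eq_right[symmetric] integral_mult_right by simp

lemma Rw_cong: "(\<And>s. s \<ge> 0 \<Longrightarrow> v s = w s) \<Longrightarrow> t \<ge> 0 \<Longrightarrow> Rw v t = Rw w t"
  unfolding Rw_def by (intro arg_cong2[where f="(*)"] refl integral_cong) auto

end

lemma exp_neg_lim: "((\<lambda>t::real. exp (- c * t)) \<longlongrightarrow> 0) at_top" if "c > 0"
proof -
  have "filterlim (\<lambda>t::real. c * t) at_top at_top"
    using that by (intro filterlim_tendsto_pos_mult_at_top[OF tendsto_const] filterlim_ident) auto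
  then have "filterlim (\<lambda>t::real. - (c * t)) at_bot at_top"
    by (simp add: filterlim_uminus_at_bot)
  then show ?thesis by (auto intro: filterlim_compose[OF exp_at_bot])
qed

lemma int_exp_kernel:
  fixes a b c t :: real
  assumes "a \<le> b" "c > 0"
  shows "((\<lambda>s. exp (-c*(t-s))) has_integral (exp(-c*(t-b)) - exp(-c*(t-a)))/c) {a..b}"
proof -
  have "((\<lambda>s. exp (-c*(t-s))) has_integral (exp(-c*(t-b))/c - exp(-c*(t-a))/c)) {a..b}"
  proof (rule fundamental_theorem_of_calculus[OF assms(1)])
    fix s assume "s \<in> {a..b}"
    have "((\<lambda>s. exp (-c*(t-s)) / c) has_real_derivative (exp (-c*(t-s)) * (- c * (0 - 1))) / c) (at s within {a..b})"
      using assms(2) by (intro derivative_eq_intros) auto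
    then have "((\<lambda>s. exp (-c*(t-s)) / c) has_real_derivative exp (-c*(t-s))) (at s within {a..b})"
      by (rule DERIV_cong) (use \<open>c > 0\<close> in \<open>simp add: field_simps\<close>)
    then show "((\<lambda>s. exp (-c*(t-s)) / c) has_vector_derivative exp (-c*(t-s))) (at s within {a..b})"
      by (simp add: has_real_derivative_iff_has_vector_derivative)
  qed
  then show ?thesis by (simp add: diff_divide_distrib)
qed

context ctx begin

definition t0 :: real where "t0 = (SOME t0. t0 \<ge> 0 \<and> (\<forall>r\<ge>t0. p r \<le> \<omega>^2))"
definition cc :: real where "cc = \<omega>^2 / 2"
definition Kc :: real where "Kc = exp (p 0 * t0 / 2)"

lemma t0_prop: "t0 \<ge> 0" "\<And>r. r \<ge> t0 \<Longrightarrow> p r \<le> \<omega>^2"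
proof -
  have "\<forall>\<^sub>F r in at_top. p r < \<omega>^2"
    using order_tendstoD(2)[OF p_lim] omega_pos by simp
  then obtain N where N: "\<And>r. r \<ge> N \<Longrightarrow> p r < \<omega>^2" by (auto simp: eventually_at_top_linorder)
  have "\<exists>t0. t0 \<ge> 0 \<and> (\<forall>r\<ge>t0. p r \<le> \<omega>^2)"
    by (rule exI[of _ "max 0 N"]) (use N in \<open>auto simp: less_imp_le\<close>)
  then have "t0 \<ge> 0 \<and> (\<forall>r\<ge>t0. p r \<le> \<omega>^2)" unfolding t0_def by (rule someI_ex)
  then show "t0 \<ge> 0" "\<And>r. r \<ge> t0 \<Longrightarrow> p r \<le> \<omega>^2" by auto
qed

lemma cc_pos: "cc > 0" using omega_pos by (simp add: cc_def)
lemma Kc_pos: "Kc > 0" by (simp add: Kc_def)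

lemma p_int: "0 \<le> a \<Longrightarrow> p integrable_on {a..b}"
  by (rule integrable_Ici[OF _ p_cont])

lemma intp_le_const:
  assumes "0 \<le> s" "s \<le> t" "\<And>r. r \<in> {s..t} \<Longrightarrow> p r \<le> C"
  shows "integral {s..t} p \<le> C * (t - s)"
proof -
  have "integral {s..t} p \<le> integral {s..t} (\<lambda>r. C)"
    by (rule integral_le) (use assms p_int in auto)
  then show ?thesis using assms by (simp add: content_real mult.commute)
qed

lemma intp_bound:
  assumes "0 \<le> s" "s \<le> t"
  shows "integral {s..t} p \<le> p 0 * t0 + \<omega>^2 * (t - s)"
proof -
  have p0: "p r \<le> p 0" if "r \<ge> 0" for r using p_mono[of 0 r] that by auto
  have p0pos: "p 0 > 0" using p_pos by auto
  have w: "\<omega>^2 > 0" using omega_pos by simp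
  consider "t0 \<le> s" | "s < t0" "t0 < t" | "t \<le> t0" by linarith
  then show ?thesis
  proof cases
    case 1
    then have "integral {s..t} p \<le> \<omega>^2 * (t - s)"
      using intp_le_const[OF assms, of "\<omega>^2"] t0_prop by auto
    then show ?thesis using p0pos t0_prop by (smt (verit) mult_nonneg_nonneg)
  next
    case 2
    have "integral {s..t0} p + integral {t0..t} p = integral {s..t} p"
      using 2 by (intro Henstock_Kurzweil_Integration.integral_combine p_int assms) auto
    moreover have "integral {s..t0} p \<le> p 0 * (t0 - s)"
      using intp_le_const[of s t0 "p 0"] 2 assms p0 by auto
    moreover have "integral {t0..t} p \<le> \<omega>^2 * (t - t0)"
      using intp_le_const[of t0 t "\<omega>^2"] 2 assms t0_prop by auto
    ultimately show ?thesis using 2 assms p0pos w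
      by (smt (verit) mult_left_mono mult_nonneg_nonneg)
  next
    case 3
    have "integral {s..t} p \<le> p 0 * (t - s)"
      using intp_le_const[of s t "p 0"] assms p0 by auto
    moreover have "p 0 * (t - s) \<le> p 0 * t0" using 3 assms p0pos by (intro mult_left_mono) auto
    ultimately show ?thesis using w assms by (smt (verit) mult_nonneg_nonneg)
  qed
qed

lemma E_split:
  assumes "0 \<le> s" "s \<le> t"
  shows "E t = E s * exp ((1/2) * integral {s..t} p - \<omega>^2 * (t - s))"
proof -
  have "integral {0..s} p + integral {s..t} p = integral {0..t} p"
    using assms by (intro Henstock_Kurzweil_Integration.integral_combine p_int) auto
  then show ?thesis unfolding E_def Afun_def
    by (simp flip: exp_add add: algebra_simps)
qed

lemma E_ratio:
  assumes "0 \<le> s" "s \<le> t"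
  shows "E t \<le> Kc * exp (- cc * (t - s)) * E s"
proof -
  have h: "integral {s..t} p \<le> p 0 * t0 + \<omega>^2 * (t - s)" by (rule intp_bound[OF assms])
  have "- cc * (t - s) = -(\<omega>^2 * (t - s)) / 2" by (simp add: cc_def)
  then have "(1/2) * integral {s..t} p - \<omega>^2 * (t - s) \<le> p 0 * t0 / 2 + (- cc * (t - s))"
    using h by linarith
  then have "exp ((1/2) * integral {s..t} p - \<omega>^2 * (t - s)) \<le> Kc * exp (- cc * (t - s))"
    unfolding Kc_def by (simp flip: exp_add)
  then show ?thesis using E_split[OF assms] E_pos[of s]
    by (simp add: mult.commute mult_left_mono)
qed

lemma E_lim: "(E \<longlongrightarrow> 0) at_top"
proof (rule Lim_null_comparison)
  show "\<forall>\<^sub>F t in at_top. norm (E t) \<le> Kc * exp (- cc * t)"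
    unfolding eventually_at_top_linorder
    using E_ratio[of 0] E_pos E0 by (intro exI[of _ 0]) (auto simp: less_imp_le)
  show "((\<lambda>t. Kc * exp (- cc * t)) \<longlongrightarrow> 0) at_top"
    using tendsto_mult_right_zero[OF exp_neg_lim[OF cc_pos]] by simp
qed

lemma kern_cont: "continuous_on {0..} v \<Longrightarrow> continuous_on {0..} (\<lambda>s. exp (- cc * (t - s)) * \<bar>v s\<bar>)"
  by (intro continuous_intros)

lemma Rw_abs_le:
  assumes v: "continuous_on {0..} v" and t: "t \<ge> 0"
  shows "\<bar>Rw v t\<bar> \<le> Kc * integral {0..t} (\<lambda>s. exp (- cc * (t - s)) * \<bar>v s\<bar>)"
proof -
  have c1: "continuous_on {0..} (\<lambda>s. \<bar>v s\<bar> / E s)"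
    using cont_div_E[of "\<lambda>s. \<bar>v s\<bar>"] v by (auto intro: continuous_intros)
  have "\<bar>integral {0..t} (\<lambda>s. v s / E s)\<bar> \<le> integral {0..t} (\<lambda>s. \<bar>v s\<bar> / E s)"
    using integral_norm_bound_integral[of "\<lambda>s. v s / E s" "{0..t}" "\<lambda>s. \<bar>v s\<bar> / E s"]
      integrable_Ici[OF _ c1] integrable_Ici[OF _ cont_div_E[OF v]] E_pos
    by (auto simp: abs_divide less_imp_le)
  then have "\<bar>Rw v t\<bar> \<le> E t * integral {0..t} (\<lambda>s. \<bar>v s\<bar> / E s)"
    unfolding Rw_def using E_pos[of t] by (simp add: abs_mult)
  also have "\<dots> = integral {0..t} (\<lambda>s. E t * (\<bar>v s\<bar> / E s))" by (simp only: integral_mult_right)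
  also have "\<dots> \<le> integral {0..t} (\<lambda>s. Kc * (exp (- cc * (t - s)) * \<bar>v s\<bar>))"
  proof (rule integral_le)
    show "(\<lambda>s. E t * (\<bar>v s\<bar> / E s)) integrable_on {0..t}"
      using integrable_Ici[OF _ c1] integrable_on_cmult_left[of "\<lambda>s. \<bar>v s\<bar> / E s" "{0..t}" "E t"] by auto
    show "(\<lambda>s. Kc * (exp (- cc * (t - s)) * \<bar>v s\<bar>)) integrable_on {0..t}"
      using integrable_Ici[OF _ kern_cont[OF v]] integrable_on_cmult_left[of "\<lambda>s. exp (- cc * (t - s)) * \<bar>v s\<bar>" "{0..t}" Kc] by auto
    fix s assume s: "s \<in> {0..t}"
    have "E t \<le> Kc * exp (- cc * (t - s)) * E s" using E_ratio[of s t] s by auto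
    then have "E t / E s \<le> Kc * exp (- cc * (t - s))" using E_pos[of s] by (simp add: divide_le_eq)
    then have "E t / E s * \<bar>v s\<bar> \<le> Kc * exp (- cc * (t - s)) * \<bar>v s\<bar>" by (rule mult_right_mono) auto
    then show "E t * (\<bar>v s\<bar> / E s) \<le> Kc * (exp (- cc * (t - s)) * \<bar>v s\<bar>)" by (simp add: field_simps)
  qed
  also have "\<dots> = Kc * integral {0..t} (\<lambda>s. exp (- cc * (t - s)) * \<bar>v s\<bar>)" by simp
  finally show ?thesis .
qed

lemma kern_int_le:
  assumes v: "continuous_on {0..} v" and "0 \<le> a" "a \<le> b" and M: "\<And>s. s \<in> {a..b} \<Longrightarrow> \<bar>v s\<bar> \<le> M"
  shows "integral {a..b} (\<lambda>s. exp (- cc * (t - s)) * \<bar>v s\<bar>) \<le> M * exp (- cc * (t - b)) / cc"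
proof -
  have "\<bar>v a\<bar> \<le> M" by (rule M) (use assms in auto)
  then have M0: "M \<ge> 0" by linarith
  have "integral {a..b} (\<lambda>s. exp (- cc * (t - s)) * \<bar>v s\<bar>) \<le> integral {a..b} (\<lambda>s. M * exp (- cc * (t - s)))"
  proof (rule integral_le)
    show "(\<lambda>s. exp (- cc * (t - s)) * \<bar>v s\<bar>) integrable_on {a..b}"
      using integrable_Ici[OF _ kern_cont[OF v]] assms by auto
    show "(\<lambda>s. M * exp (- cc * (t - s))) integrable_on {a..b}"
      using has_integral_mult_right[OF int_exp_kernel[OF assms(3) cc_pos, of t], of M] by blast
  qed (use M in \<open>auto simp: mult.commute intro: mult_left_mono\<close>)
  also have "\<dots> = M * ((exp(-cc*(t-b)) - exp(-cc*(t-a)))/cc)"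
    using integral_unique[OF int_exp_kernel[OF assms(3) cc_pos, of t]] by simp
  also have "\<dots> \<le> M * exp (- cc * (t - b)) / cc"
    using M0 cc_pos by (simp add: divide_right_mono mult_left_mono field_simps)
  finally show ?thesis .
qed

lemma Rw_bounded:
  assumes v: "continuous_on {0..} v" and M: "\<And>s. s \<ge> 0 \<Longrightarrow> \<bar>v s\<bar> \<le> M" and t: "t \<ge> 0"
  shows "\<bar>Rw v t\<bar> \<le> Kc * M / cc"
proof -
  have "\<bar>Rw v t\<bar> \<le> Kc * integral {0..t} (\<lambda>s. exp (- cc * (t - s)) * \<bar>v s\<bar>)"
    by (rule Rw_abs_le[OF v t])
  also have "\<dots> \<le> Kc * (M * exp (- cc * (t - t)) / cc)"
    using kern_int_le[OF v _ t, of M t] M Kc_pos by (intro mult_left_mono) auto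
  finally show ?thesis by simp
qed

lemma Rw_null:
  assumes v: "continuous_on {0..} v" and lim: "(v \<longlongrightarrow> 0) at_top"
  shows "(Rw v \<longlongrightarrow> 0) at_top"
proof (rule tendstoI)
  fix e :: real assume e: "e > 0"
  define e' where "e' = e * cc / (4 * Kc)"
  have e': "e' > 0" using e cc_pos Kc_pos by (simp add: e'_def)
  obtain S0 where S0: "\<And>s. s \<ge> S0 \<Longrightarrow> \<bar>v s\<bar> < e'"
    using tendstoD[OF lim e'] by (auto simp: eventually_at_top_linorder dist_real_def)
  define S where "S = max 0 S0"
  have S: "S \<ge> 0" "\<And>s. s \<ge> S \<Longrightarrow> \<bar>v s\<bar> \<le> e'" using S0 by (auto simp: S_def less_imp_le)
  define CS where "CS = integral {0..S} (\<lambda>s. exp (- cc * (S - s)) * \<bar>v s\<bar>)"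
  have "((\<lambda>t. (Kc * CS * exp (cc * S)) * exp (- cc * t)) \<longlongrightarrow> 0) at_top"
    using tendsto_mult_right_zero[OF exp_neg_lim[OF cc_pos]] by simp
  then have ev: "\<forall>\<^sub>F t in at_top. (Kc * CS * exp (cc * S)) * exp (- cc * t) < e / 2"
    using e by (intro order_tendstoD) auto
  show "\<forall>\<^sub>F t in at_top. dist (Rw v t) 0 < e"
    using ev eventually_ge_at_top[of S]
  proof eventually_elim
    case (elim t)
    have tS: "t \<ge> S" using elim by auto
    have split: "integral {0..S} (\<lambda>s. exp (- cc * (t - s)) * \<bar>v s\<bar>) + integral {S..t} (\<lambda>s. exp (- cc * (t - s)) * \<bar>v s\<bar>)
        = integral {0..t} (\<lambda>s. exp (- cc * (t - s)) * \<bar>v s\<bar>)"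
      using tS S by (intro Henstock_Kurzweil_Integration.integral_combine integrable_Ici kern_cont v) auto
    have first: "integral {0..S} (\<lambda>s. exp (- cc * (t - s)) * \<bar>v s\<bar>) = exp (cc * S) * exp (- cc * t) * CS"
    proof -
      have "integral {0..S} (\<lambda>s. exp (- cc * (t - s)) * \<bar>v s\<bar>)
          = integral {0..S} (\<lambda>s. (exp (cc * S) * exp (- cc * t)) * (exp (- cc * (S - s)) * \<bar>v s\<bar>))"
        by (intro integral_cong) (simp flip: exp_add add: algebra_simps)
      then show ?thesis by (simp add: CS_def)
    qed
    have second: "integral {S..t} (\<lambda>s. exp (- cc * (t - s)) * \<bar>v s\<bar>) \<le> e' * exp (- cc * (t - t)) / cc"
      using kern_int_le[OF v S(1) tS, of e' t] S by auto
    have "\<bar>Rw v t\<bar> \<le> Kc * integral {0..t} (\<lambda>s. exp (- cc * (t - s)) * \<bar>v s\<bar>)"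
      using Rw_abs_le[OF v] tS S by auto
    also have "\<dots> \<le> Kc * (exp (cc * S) * exp (- cc * t) * CS + e' / cc)"
      using split first second Kc_pos by (intro mult_left_mono) auto
    also have "\<dots> = (Kc * CS * exp (cc * S)) * exp (- cc * t) + e / 4"
      using Kc_pos cc_pos by (simp add: e'_def field_simps)
    also have "\<dots> < e" using elim e by auto
    finally show ?case by (simp add: dist_real_def)
  qed
qed

definition trig :: "real \<Rightarrow> real \<Rightarrow> real \<Rightarrow> real" where
  "trig a b t = a * cos (\<omega> * t) + b * sin (\<omega> * t)"

lemma trig_deriv: "(trig a b has_real_derivative (\<omega> * (b * cos (\<omega> * t) - a * sin (\<omega> * t)))) (at t within S)"
proof -
  have "((\<lambda>t. a * cos (\<omega> * t) + b * sin (\<omega> * t)) has_real_derivative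
     a * (- sin (\<omega> * t) * (\<omega> * 1)) + b * (cos (\<omega> * t) * (\<omega> * 1))) (at t within S)"
    by (intro derivative_eq_intros) auto
  then show ?thesis unfolding trig_def[abs_def] by (rule DERIV_cong) (simp add: algebra_simps)
qed

lemma trig_cont: "continuous_on S (trig a b)"
  unfolding trig_def[abs_def] by (intro continuous_intros)

lemma trig_bound: "\<bar>trig a b t\<bar> \<le> \<bar>a\<bar> + \<bar>b\<bar>"
proof -
  have "\<bar>a * cos (\<omega> * t)\<bar> \<le> \<bar>a\<bar>" by (simp add: abs_mult mult_left_le)
  moreover have "\<bar>b * sin (\<omega> * t)\<bar> \<le> \<bar>b\<bar>" by (simp add: abs_mult mult_left_le)
  ultimately show ?thesis unfolding trig_def by linarith
qed

lemma bounded_times_null: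
  fixes g h :: "real \<Rightarrow> real"
  assumes "(g \<longlongrightarrow> 0) at_top" "\<forall>\<^sub>F t in at_top. \<bar>h t\<bar> \<le> B"
  shows "((\<lambda>t. h t * g t) \<longlongrightarrow> 0) at_top"
proof (rule Lim_null_comparison[where g="\<lambda>t. B * \<bar>g t\<bar>"])
  show "\<forall>\<^sub>F t in at_top. norm (h t * g t) \<le> B * \<bar>g t\<bar>"
    using assms(2) by eventually_elim (auto simp: abs_mult intro!: mult_right_mono)
  show "((\<lambda>t. B * \<bar>g t\<bar>) \<longlongrightarrow> 0) at_top"
    using tendsto_mult_right_zero[OF tendsto_rabs_zero[OF assms(1)]] by simp
qed

lemma Rw_trig:
  assumes v: "continuous_on {0..} v" and lim: "((\<lambda>t. v t - trig a b t) \<longlongrightarrow> 0) at_top"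
  shows "\<exists>a' b'. \<omega>^2 * a' + \<omega> * b' = a \<and> \<omega>^2 * b' - \<omega> * a' = b \<and>
      ((\<lambda>t. Rw v t - trig a' b' t) \<longlongrightarrow> 0) at_top"
proof -
  define d where "d = \<omega>^4 + \<omega>^2"
  have d: "d > 0" using omega_pos unfolding d_def by (intro add_pos_pos) auto
  define a' where "a' = (\<omega>^2 * a - \<omega> * b) / d"
  define b' where "b' = (\<omega> * a + \<omega>^2 * b) / d"
  have dn: "d \<noteq> 0" using d by simp
  have eq1: "\<omega>^2 * a' + \<omega> * b' = a" unfolding a'_def b'_def
    using dn unfolding d_def by (simp add: divide_simps) algebra
  have eq2: "\<omega>^2 * b' - \<omega> * a' = b" unfolding a'_def b'_def
    using dn unfolding d_def by (simp add: divide_simps) algebra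
  define w where "w t = (v t - trig a b t) + trig a' b' t * (p t / 2)" for t
  have wc: "continuous_on {0..} w" unfolding w_def[abs_def]
    by (intro continuous_intros v trig_cont p_cont) auto
  have wl: "(w \<longlongrightarrow> 0) at_top"
  proof -
    have h1: "((\<lambda>t. p t / 2) \<longlongrightarrow> 0) at_top" using tendsto_divide_zero[OF p_lim, of 2] by simp
    have h2: "((\<lambda>t. trig a' b' t * (p t / 2)) \<longlongrightarrow> 0) at_top"
      by (rule bounded_times_null[OF h1, where B="\<bar>a'\<bar> + \<bar>b'\<bar>"]) (simp add: trig_bound)
    from tendsto_add[OF lim h2] show ?thesis by (simp add: w_def[abs_def])
  qed
  define D where "D t = Rw v t - trig a' b' t" for t
  have Dd: "(D has_real_derivative (w t - k t * D t)) (at t within {0..})" if t: "t \<ge> 0" for t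
  proof -
    have "(D has_real_derivative ((v t - k t * Rw v t) - \<omega> * (b' * cos (\<omega> * t) - a' * sin (\<omega> * t)))) (at t within {0..})"
      unfolding D_def[abs_def] by (intro DERIV_diff Rw_deriv v t trig_deriv)
    then show ?thesis
    proof (rule DERIV_cong)
      have "\<omega> * (b' * cos (\<omega> * t) - a' * sin (\<omega> * t)) + \<omega>^2 * trig a' b' t
          = (\<omega>^2 * a' + \<omega> * b') * cos (\<omega> * t) + (\<omega>^2 * b' - \<omega> * a') * sin (\<omega> * t)"
        unfolding trig_def by (simp add: algebra_simps)
      also have "\<dots> = trig a b t" unfolding eq1 eq2 trig_def ..
      finally have "\<omega> * (b' * cos (\<omega> * t) - a' * sin (\<omega> * t)) + \<omega>^2 * trig a' b' t = trig a b t" .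
      then show "(v t - k t * Rw v t) - \<omega> * (b' * cos (\<omega> * t) - a' * sin (\<omega> * t)) = w t - k t * D t"
        unfolding w_def D_def k_def by (simp add: algebra_simps)
    qed
  qed
  have Deq: "D t = D 0 * E t + Rw w t" if "t \<ge> 0" for t
    by (rule Rw_unique[OF wc Dd that])
  have lim1: "((\<lambda>t. D 0 * E t + Rw w t) \<longlongrightarrow> 0) at_top"
    using tendsto_add[OF tendsto_mult_right_zero[OF E_lim, of "D 0"] Rw_null[OF wc wl]] by simp
  have ev: "\<forall>\<^sub>F t in at_top. D 0 * E t + Rw w t = D t"
    unfolding eventually_at_top_linorder by (intro exI[of _ 0] allI impI, rule Deq[symmetric])
  have "(D \<longlongrightarrow> 0) at_top" by (rule Lim_transform_eventually[OF lim1 ev])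
  then have "((\<lambda>t. Rw v t - trig a' b' t) \<longlongrightarrow> 0) at_top" by (simp add: D_def[abs_def])
  then show ?thesis using eq1 eq2 by (intro exI[of _ a'] exI[of _ b'] conjI)
qed

end

lemma integrable_cmult_real: "f integrable_on S \<Longrightarrow> (\<lambda>x. c * f x) integrable_on S" for f :: "real \<Rightarrow> real"
  using integrable_cmul[of f S c] by simp

lemma mono_bdd_conv:
  fixes F :: "real \<Rightarrow> real"
  assumes mono: "\<And>s t. 0 \<le> s \<Longrightarrow> s \<le> t \<Longrightarrow> F s \<le> F t"
    and bdd: "\<And>t. t \<ge> 0 \<Longrightarrow> F t \<le> B"
  shows "\<exists>L. (F \<longlongrightarrow> L) at_top"
proof -
  define L where "L = Sup (F ` {0..})"
  have ba: "bdd_above (F ` {0..})" using bdd unfolding bdd_above_def by auto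
  have "(F \<longlongrightarrow> L) at_top"
  proof (rule increasing_tendsto)
    show "\<forall>\<^sub>F n in at_top. F n \<le> L"
      unfolding eventually_at_top_linorder L_def
      by (intro exI[of _ 0] allI impI cSup_upper ba) auto
    fix y assume "y < L"
    then obtain s where s: "s \<ge> 0" "y < F s"
      using less_cSup_iff[of "F ` {0..}" y] ba unfolding L_def by auto
    show "\<forall>\<^sub>F n in at_top. y < F n"
      unfolding eventually_at_top_linorder
    proof (intro exI[of _ s] allI impI)
      fix n assume "s \<le> n"
      then have "F s \<le> F n" using mono s by auto
      then show "y < F n" using s by linarith
    qed
  qed
  then show ?thesis by blast
qed

lemma integrable_Ici': "continuous_on {0..} v \<Longrightarrow> 0 \<le> a \<Longrightarrow> v integrable_on {a..b}" for v :: "real \<Rightarrow> real"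
  by (rule integrable_continuous_interval, erule continuous_on_subset) auto

lemma int_mono_nonneg:
  fixes h :: "real \<Rightarrow> real"
  assumes "continuous_on {0..} h" "\<And>t. t \<ge> 0 \<Longrightarrow> h t \<ge> 0" "0 \<le> s" "s \<le> t"
  shows "integral {0..s} h \<le> integral {0..t} h"
proof -
  have "integral {0..s} h + integral {s..t} h = integral {0..t} h"
    using assms by (intro Henstock_Kurzweil_Integration.integral_combine integrable_Ici') auto
  moreover have "integral {s..t} h \<ge> 0"
    using assms by (intro integral_nonneg integrable_Ici') auto
  ultimately show ?thesis by linarith
qed

definition l1 :: "(real \<Rightarrow> real) \<Rightarrow> bool" where
  "l1 h \<longleftrightarrow> continuous_on {0..} h \<and> (\<exists>B. \<forall>T\<ge>0. integral {0..T} (\<lambda>t. \<bar>h t\<bar>) \<le> B)"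

lemma l1_conv:
  assumes "l1 h"
  shows "\<exists>L. ((\<lambda>T. integral {0..T} h) \<longlongrightarrow> L) at_top"
proof -
  obtain B where B: "\<And>T. T \<ge> 0 \<Longrightarrow> integral {0..T} (\<lambda>t. \<bar>h t\<bar>) \<le> B" and hc: "continuous_on {0..} h"
    using assms unfolding l1_def by auto
  have hac: "continuous_on {0..} (\<lambda>t. \<bar>h t\<bar>)" using hc by (intro continuous_intros)
  have hbc: "continuous_on {0..} (\<lambda>t. \<bar>h t\<bar> - h t)" using hc by (intro continuous_intros)
  obtain L1 where L1: "((\<lambda>T. integral {0..T} (\<lambda>t. \<bar>h t\<bar>)) \<longlongrightarrow> L1) at_top"
    using mono_bdd_conv[of "\<lambda>T. integral {0..T} (\<lambda>t. \<bar>h t\<bar>)" B] B int_mono_nonneg[OF hac] by auto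
  have "integral {0..T} (\<lambda>t. \<bar>h t\<bar> - h t) \<le> 2 * B" if "T \<ge> 0" for T
  proof -
    have "integral {0..T} (\<lambda>t. \<bar>h t\<bar> - h t) \<le> integral {0..T} (\<lambda>t. 2 * \<bar>h t\<bar>)"
      by (rule integral_le) (use hbc hac that in \<open>auto intro!: integrable_Ici' integrable_cmult_real\<close>)
    also have "\<dots> \<le> 2 * B" using B[OF that] by simp
    finally show ?thesis .
  qed
  then obtain L2 where L2: "((\<lambda>T. integral {0..T} (\<lambda>t. \<bar>h t\<bar> - h t)) \<longlongrightarrow> L2) at_top"
    using mono_bdd_conv[of "\<lambda>T. integral {0..T} (\<lambda>t. \<bar>h t\<bar> - h t)" "2*B"] int_mono_nonneg[OF hbc] by auto
  have "((\<lambda>T. integral {0..T} (\<lambda>t. \<bar>h t\<bar>) - integral {0..T} (\<lambda>t. \<bar>h t\<bar> - h t)) \<longlongrightarrow> L1 - L2) at_top"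
    by (rule tendsto_diff[OF L1 L2])
  moreover have "\<forall>\<^sub>F T in at_top. integral {0..T} (\<lambda>t. \<bar>h t\<bar>) - integral {0..T} (\<lambda>t. \<bar>h t\<bar> - h t) = integral {0..T} h"
    unfolding eventually_at_top_linorder
  proof (intro exI[of _ 0] allI impI)
    fix T :: real assume "T \<ge> 0"
    have "integral {0..T} (\<lambda>t. \<bar>h t\<bar> - h t) = integral {0..T} (\<lambda>t. \<bar>h t\<bar>) - integral {0..T} h"
      by (rule integral_diff) (use hac hc in \<open>auto intro: integrable_Ici'\<close>)
    then show "integral {0..T} (\<lambda>t. \<bar>h t\<bar>) - integral {0..T} (\<lambda>t. \<bar>h t\<bar> - h t) = integral {0..T} h" by simp
  qed
  ultimately have "((\<lambda>T. integral {0..T} h) \<longlongrightarrow> L1 - L2) at_top" by (rule Lim_transform_eventually)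
  then show ?thesis by blast
qed

lemma l1_le:
  assumes "continuous_on {0..} h" "\<And>t. t \<ge> 0 \<Longrightarrow> \<bar>h t\<bar> \<le> g t" "l1 g"
  shows "l1 h"
proof -
  obtain B where B: "\<And>T. T \<ge> 0 \<Longrightarrow> integral {0..T} (\<lambda>t. \<bar>g t\<bar>) \<le> B" and gc: "continuous_on {0..} g"
    using assms unfolding l1_def by auto
  have "integral {0..T} (\<lambda>t. \<bar>h t\<bar>) \<le> B" if "T \<ge> 0" for T
  proof -
    have "integral {0..T} (\<lambda>t. \<bar>h t\<bar>) \<le> integral {0..T} (\<lambda>t. \<bar>g t\<bar>)"
    proof (rule integral_le)
      show "(\<lambda>t. \<bar>h t\<bar>) integrable_on {0..T}" using assms(1) by (intro integrable_Ici' continuous_intros) auto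
      show "(\<lambda>t. \<bar>g t\<bar>) integrable_on {0..T}" using gc by (intro integrable_Ici' continuous_intros) auto
      show "\<And>t. t \<in> {0..T} \<Longrightarrow> \<bar>h t\<bar> \<le> \<bar>g t\<bar>" using assms(2) by force
    qed
    then show ?thesis using B[OF that] by linarith
  qed
  then show ?thesis using assms(1) unfolding l1_def by auto
qed

lemma l1_add:
  assumes "l1 g" "l1 h" shows "l1 (\<lambda>t. g t + h t)"
proof -
  obtain B1 where B1: "\<And>T. T \<ge> 0 \<Longrightarrow> integral {0..T} (\<lambda>t. \<bar>g t\<bar>) \<le> B1" and gc: "continuous_on {0..} g"
    using assms unfolding l1_def by auto
  obtain B2 where B2: "\<And>T. T \<ge> 0 \<Longrightarrow> integral {0..T} (\<lambda>t. \<bar>h t\<bar>) \<le> B2" and hc: "continuous_on {0..} h"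
    using assms unfolding l1_def by auto
  have "integral {0..T} (\<lambda>t. \<bar>g t + h t\<bar>) \<le> B1 + B2" if "T \<ge> 0" for T
  proof -
    have ig: "(\<lambda>t. \<bar>g t\<bar>) integrable_on {0..T}" using gc by (intro integrable_Ici' continuous_intros) auto
    have ih: "(\<lambda>t. \<bar>h t\<bar>) integrable_on {0..T}" using hc by (intro integrable_Ici' continuous_intros) auto
    have "integral {0..T} (\<lambda>t. \<bar>g t + h t\<bar>) \<le> integral {0..T} (\<lambda>t. \<bar>g t\<bar> + \<bar>h t\<bar>)"
      by (rule integral_le) (use gc hc ig ih in \<open>auto intro!: integrable_Ici' continuous_intros integrable_add abs_triangle_ineq\<close>)
    also have "\<dots> = integral {0..T} (\<lambda>t. \<bar>g t\<bar>) + integral {0..T} (\<lambda>t. \<bar>h t\<bar>)"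
      by (rule integral_add[OF ig ih])
    finally show ?thesis using B1[OF that] B2[OF that] by linarith
  qed
  then show ?thesis using gc hc unfolding l1_def by (auto intro!: continuous_intros)
qed

lemma l1_cmult:
  assumes "l1 h" shows "l1 (\<lambda>t. c * h t)"
proof -
  obtain B where B: "\<And>T. T \<ge> 0 \<Longrightarrow> integral {0..T} (\<lambda>t. \<bar>h t\<bar>) \<le> B" and hc: "continuous_on {0..} h"
    using assms unfolding l1_def by auto
  have "integral {0..T} (\<lambda>t. \<bar>c * h t\<bar>) \<le> \<bar>c\<bar> * B" if "T \<ge> 0" for T
    using B[OF that] by (simp add: abs_mult mult_left_mono)
  then show ?thesis using hc unfolding l1_def by (auto intro!: continuous_intros)
qed

lemma l1_diff: "l1 g \<Longrightarrow> l1 h \<Longrightarrow> l1 (\<lambda>t. g t - h t)"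
  using l1_add[of g "\<lambda>t. (-1) * h t"] l1_cmult[of h "-1"] by simp

lemma l1_mult_bounded:
  assumes "l1 h" "continuous_on {0..} b" "\<And>t. t \<ge> 0 \<Longrightarrow> \<bar>b t\<bar> \<le> M"
  shows "l1 (\<lambda>t. b t * h t)"
proof (rule l1_le)
  show "continuous_on {0..} (\<lambda>t. b t * h t)" using assms unfolding l1_def by (auto intro!: continuous_intros)
  show "l1 (\<lambda>t. M * \<bar>h t\<bar>)"
  proof (rule l1_cmult)
    show "l1 (\<lambda>t. \<bar>h t\<bar>)" using assms(1) unfolding l1_def by (auto intro!: continuous_intros)
  qed
  fix t :: real assume "t \<ge> 0"
  then show "\<bar>b t * h t\<bar> \<le> M * \<bar>h t\<bar>" using assms(3) by (simp add: abs_mult mult_right_mono)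
qed

context ctx begin

lemma l1_p': "l1 p'"
proof -
  have "integral {0..T} (\<lambda>t. \<bar>p' t\<bar>) \<le> p 0" if "T \<ge> 0" for T
  proof -
    have "integral {0..T} (\<lambda>t. \<bar>p' t\<bar>) = integral {0..T} (\<lambda>t. - p' t)"
      by (rule integral_cong) (use p'_neg in \<open>auto simp: abs_if\<close>)
    also have "\<dots> = - (p T - p 0)" using integral_unique[OF p_ftc[of 0 T]] that by simp
    finally show ?thesis using p_pos[OF that] by simp
  qed
  then show ?thesis using p'_cont unfolding l1_def by auto
qed

lemma l1_psq: "l1 (\<lambda>t. (p t)^2)"
proof -
  have cont: "continuous_on {0..} (\<lambda>t. (p t)^2)" by (intro continuous_intros p_cont)
  have "integral {0..T} (\<lambda>t. \<bar>(p t)^2\<bar>) \<le> integral {0..} (\<lambda>t. (p t)^2)" if "T \<ge> 0" for T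
    using integral_subset_le[of "{0..T}" "{0..}" "\<lambda>t. (p t)^2"] integrable_Ici'[OF cont, of 0 T] p_sq_int
    by auto
  then show ?thesis using cont unfolding l1_def by auto
qed

lemma Rw_abs_le_Rw:
  assumes v: "continuous_on {0..} v" and t: "t \<ge> 0"
  shows "\<bar>Rw v t\<bar> \<le> Rw (\<lambda>s. \<bar>v s\<bar>) t"
proof -
  have c1: "continuous_on {0..} (\<lambda>s. \<bar>v s\<bar> / E s)"
    using cont_div_E[of "\<lambda>s. \<bar>v s\<bar>"] v by (auto intro: continuous_intros)
  have "\<bar>integral {0..t} (\<lambda>s. v s / E s)\<bar> \<le> integral {0..t} (\<lambda>s. \<bar>v s\<bar> / E s)"
    using integral_norm_bound_integral[of "\<lambda>s. v s / E s" "{0..t}" "\<lambda>s. \<bar>v s\<bar> / E s"]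
      integrable_Ici[OF _ c1] integrable_Ici[OF _ cont_div_E[OF v]] E_pos
    by (auto simp: abs_divide less_imp_le)
  then show ?thesis
    unfolding Rw_def using E_pos[of t] by (simp add: abs_mult)
qed

lemma Rw_nonneg:
  assumes v: "continuous_on {0..} v" "\<And>s. s \<ge> 0 \<Longrightarrow> v s \<ge> 0" and t: "t \<ge> 0"
  shows "Rw v t \<ge> 0"
  unfolding Rw_def using E_pos assms
  by (intro mult_nonneg_nonneg integral_nonneg integrable_Ici cont_div_E) (auto simp: less_imp_le)

lemma k_ge: "t \<ge> t0 \<Longrightarrow> k t \<ge> cc"
  using t0_prop(2)[of t] by (simp add: k_def cc_def)

lemma l1_Rw_nonneg:
  assumes l: "l1 v" and nn: "\<And>s. s \<ge> 0 \<Longrightarrow> v s \<ge> 0"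
  shows "l1 (Rw v)"
proof -
  obtain B where B: "\<And>T. T \<ge> 0 \<Longrightarrow> integral {0..T} (\<lambda>t. \<bar>v t\<bar>) \<le> B" and vc: "continuous_on {0..} v"
    using l unfolding l1_def by auto
  define Z where "Z = Rw v"
  have Zc: "continuous_on {0..} Z" unfolding Z_def by (rule Rw_cont[OF vc])
  have Zn: "\<And>t. t \<ge> 0 \<Longrightarrow> Z t \<ge> 0" unfolding Z_def by (rule Rw_nonneg[OF vc nn])
  have kZc: "continuous_on {0..} (\<lambda>t. k t * Z t)" by (intro continuous_intros k_cont Zc)
  define C0 where "C0 = integral {0..t0} Z"
  have main: "integral {t0..T} Z \<le> (B + Z t0) / cc" if T: "T \<ge> t0" for T
  proof -
    have ftc: "((\<lambda>t. v t - k t * Z t) has_integral (Z T - Z t0)) {t0..T}"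
    proof (rule fundamental_theorem_of_calculus[OF T])
      fix t assume "t \<in> {t0..T}"
      then have t: "t \<ge> 0" using t0_prop by auto
      have "(Z has_real_derivative (v t - k t * Z t)) (at t within {0..})"
        unfolding Z_def by (rule Rw_deriv[OF vc t])
      then have "(Z has_real_derivative (v t - k t * Z t)) (at t within {t0..T})"
        by (rule has_field_derivative_subset) (use t0_prop in auto)
      then show "(Z has_vector_derivative (v t - k t * Z t)) (at t within {t0..T})"
        by (simp add: has_real_derivative_iff_has_vector_derivative)
    qed
    have iv: "v integrable_on {t0..T}" using vc t0_prop by (intro integrable_Ici') auto
    have ikZ: "(\<lambda>t. k t * Z t) integrable_on {t0..T}" using kZc t0_prop by (intro integrable_Ici') auto
    have iZ: "Z integrable_on {t0..T}" using Zc t0_prop by (intro integrable_Ici') auto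
    have "integral {t0..T} (\<lambda>t. v t - k t * Z t) = integral {t0..T} v - integral {t0..T} (\<lambda>t. k t * Z t)"
      by (rule integral_diff[OF iv ikZ])
    then have eq: "integral {t0..T} (\<lambda>t. k t * Z t) = integral {t0..T} v - (Z T - Z t0)"
      using integral_unique[OF ftc] by simp
    have "integral {t0..T} v \<le> integral {0..T} (\<lambda>t. \<bar>v t\<bar>)"
    proof -
      have "integral {t0..T} v = integral {t0..T} (\<lambda>t. \<bar>v t\<bar>)"
        by (rule integral_cong) (use nn t0_prop in auto)
      also have "\<dots> \<le> integral {0..T} (\<lambda>t. \<bar>v t\<bar>)"
        by (rule integral_subset_le) (use vc t0_prop in \<open>auto intro!: integrable_Ici' continuous_intros\<close>)
      finally show ?thesis .
    qed
    then have "integral {t0..T} (\<lambda>t. k t * Z t) \<le> B + Z t0"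
      using eq B[of T] Zn[of T] T t0_prop by linarith
    moreover have "integral {t0..T} (\<lambda>t. cc * Z t) \<le> integral {t0..T} (\<lambda>t. k t * Z t)"
      by (rule integral_le) (use iZ ikZ k_ge Zn t0_prop in \<open>auto intro!: mult_right_mono integrable_cmult_real\<close>)
    ultimately have "cc * integral {t0..T} Z \<le> B + Z t0" by simp
    then show ?thesis using cc_pos by (simp add: field_simps)
  qed
  have "integral {0..T} (\<lambda>t. \<bar>Z t\<bar>) \<le> C0 + (B + Z t0) / cc" if T: "T \<ge> 0" for T
  proof -
    have eqa: "integral {0..T} (\<lambda>t. \<bar>Z t\<bar>) = integral {0..T} Z"
      by (rule integral_cong) (use Zn in auto)
    have "(B + Z t0) / cc \<ge> 0"
      using main[of t0] cc_pos integral_refl[of t0 Z] by auto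
    show ?thesis
    proof (cases "T \<le> t0")
      case True
      have "integral {0..T} Z \<le> integral {0..t0} Z"
        by (rule int_mono_nonneg[OF Zc Zn T True])
      then show ?thesis using eqa \<open>(B + Z t0) / cc \<ge> 0\<close> by (simp add: C0_def)
    next
      case False
      have "integral {0..t0} Z + integral {t0..T} Z = integral {0..T} Z"
        using False t0_prop by (intro Henstock_Kurzweil_Integration.integral_combine integrable_Ici' Zc) auto
      then show ?thesis using main[of T] False eqa by (simp add: C0_def)
    qed
  qed
  then show ?thesis using Zc unfolding l1_def Z_def by auto
qed

lemma l1_Rw:
  assumes l: "l1 v" shows "l1 (Rw v)"
proof -
  have vc: "continuous_on {0..} v" using l unfolding l1_def by auto
  have la: "l1 (\<lambda>s. \<bar>v s\<bar>)" using l unfolding l1_def by (auto intro!: continuous_intros)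
  show ?thesis
    by (rule l1_le[OF Rw_cont[OF vc] Rw_abs_le_Rw[OF vc] l1_Rw_nonneg[OF la]]) auto
qed

end

lemma bp:
  fixes g G \<phi> \<phi>' :: "real \<Rightarrow> real"
  assumes G: "\<And>t. t \<ge> 0 \<Longrightarrow> (g has_integral G t) {0..t}"
    and Gc: "continuous_on {0..} G"
    and \<phi>d: "\<And>t. t \<ge> 0 \<Longrightarrow> (\<phi> has_real_derivative \<phi>' t) (at t within {0..})"
    and \<phi>'c: "continuous_on {0..} \<phi>'"
    and mono: "\<And>s t. 0 \<le> s \<Longrightarrow> s \<le> t \<Longrightarrow> \<phi> s \<le> \<phi> t"
    and t: "t \<ge> 0"
  shows "((\<lambda>s. \<phi> s * g s) has_integral (\<phi> t * G t - integral {0..t} (\<lambda>s. \<phi>' s * G s))) {0..t}"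
proof -
  have gi: "g integrable_on {a..b}" if "0 \<le> a" "a \<le> b" for a b
    using integrable_subinterval_real[of g 0 b a b] G[of b] that by (auto simp: has_integral_integrable_integral)
  have G0: "G 0 = 0" using G[of 0] by (simp add: has_integral_integrable_integral)
  have GI: "integral {a..b} g = G b - G a" if "0 \<le> a" "a \<le> b" for a b
  proof -
    have "integral {0..a} g + integral {a..b} g = integral {0..b} g"
      using that by (intro Henstock_Kurzweil_Integration.integral_combine gi) auto
    moreover have "integral {0..a} g = G a" "integral {0..b} g = G b"
      using G that by (auto simp: has_integral_integrable_integral)
    ultimately show ?thesis by simp
  qed
  have smvt: "\<exists>c\<in>{a..b}. ((\<lambda>x. \<phi> x * g x) has_integral (\<phi> a * (G c - G a) + \<phi> b * (G b - G c))) {a..b}"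
    if ab: "0 \<le> a" "a \<le> b" for a b
  proof -
    obtain c where c: "c \<in> {a..b}"
      and hi: "((\<lambda>x. \<phi> x * g x) has_integral \<phi> a * integral {a..c} g + \<phi> b * integral {c..b} g) {a..b}"
      using second_mean_value_theorem_full[OF gi[OF ab] ab(2), of \<phi>] mono ab by auto
    then show ?thesis using GI[of a c] GI[of c b] ab by (intro bexI[of _ c]) auto
  qed
  have \<phi>gi: "(\<lambda>x. \<phi> x * g x) integrable_on {a..b}" if "0 \<le> a" "a \<le> b" for a b
    using smvt[OF that] by (auto simp: has_integral_integrable_integral)
  define \<Psi> where "\<Psi> s = integral {0..s} (\<lambda>x. \<phi> x * g x) - \<phi> s * G s" for s
  have \<Psi>diff: "\<exists>c\<in>{a..b}. \<Psi> b - \<Psi> a = G c * (\<phi> a - \<phi> b)" if ab: "0 \<le> a" "a \<le> b" for a b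
  proof -
    obtain c where c: "c \<in> {a..b}"
      and hi: "((\<lambda>x. \<phi> x * g x) has_integral (\<phi> a * (G c - G a) + \<phi> b * (G b - G c))) {a..b}"
      using smvt[OF ab] by blast
    have "integral {0..a} (\<lambda>x. \<phi> x * g x) + integral {a..b} (\<lambda>x. \<phi> x * g x) = integral {0..b} (\<lambda>x. \<phi> x * g x)"
      using ab by (intro Henstock_Kurzweil_Integration.integral_combine \<phi>gi) auto
    then have "\<Psi> b - \<Psi> a = (\<phi> a * (G c - G a) + \<phi> b * (G b - G c)) - \<phi> b * G b + \<phi> a * G a"
      using integral_unique[OF hi] unfolding \<Psi>_def by simp
    also have "\<dots> = G c * (\<phi> a - \<phi> b)" by (simp add: algebra_simps)
    finally show ?thesis using c by blast
  qed
  have \<Psi>d: "(\<Psi> has_real_derivative (- \<phi>' s * G s)) (at s within {0..})" if s: "s \<ge> 0" for s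
  proof -
    have "\<forall>y. \<exists>c. y \<ge> 0 \<longrightarrow> (min y s \<le> c \<and> c \<le> max y s \<and> \<Psi> y - \<Psi> s = G c * (\<phi> s - \<phi> y))"
    proof
      fix y show "\<exists>c. y \<ge> 0 \<longrightarrow> (min y s \<le> c \<and> c \<le> max y s \<and> \<Psi> y - \<Psi> s = G c * (\<phi> s - \<phi> y))"
      proof (cases "s \<le> y")
        case True
        then obtain c where "c \<in> {s..y}" "\<Psi> y - \<Psi> s = G c * (\<phi> s - \<phi> y)" using \<Psi>diff[OF s True] by blast
        then show ?thesis using True by (intro exI[of _ c]) auto
      next
        case False
        show ?thesis
        proof (cases "y \<ge> 0")
          case True
          then obtain c where "c \<in> {y..s}" "\<Psi> s - \<Psi> y = G c * (\<phi> y - \<phi> s)" using \<Psi>diff[of y s] False by auto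
          then show ?thesis using False by (intro exI[of _ c]) (auto simp: algebra_simps)
        qed auto
      qed
    qed
    then obtain c where c: "\<And>y. y \<ge> 0 \<Longrightarrow> min y s \<le> c y \<and> c y \<le> max y s \<and> \<Psi> y - \<Psi> s = G (c y) * (\<phi> s - \<phi> y)"
      by metis
    have lim\<phi>: "((\<lambda>y. (\<phi> y - \<phi> s) / (y - s)) \<longlongrightarrow> \<phi>' s) (at s within {0..})"
      using \<phi>d[OF s] by (simp add: has_field_derivative_iff)
    have limc: "(c \<longlongrightarrow> s) (at s within {0..})"
    proof -
      have "((\<lambda>y. c y - s) \<longlongrightarrow> 0) (at s within {0..})"
      proof (rule Lim_null_comparison[where g="\<lambda>y. \<bar>y - s\<bar>"])
        show "\<forall>\<^sub>F y in at s within {0..}. norm (c y - s) \<le> \<bar>y - s\<bar>"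
          unfolding eventually_at_filter
          by (rule always_eventually) (use c in \<open>force simp: abs_le_iff\<close>)
        show "((\<lambda>y. \<bar>y - s\<bar>) \<longlongrightarrow> 0) (at s within {0..})"
          by (intro tendsto_rabs_zero LIM_zero tendsto_ident_at)
      qed
      from tendsto_add[OF this tendsto_const[of s]] show ?thesis by simp
    qed
    have limG: "((\<lambda>y. G (c y)) \<longlongrightarrow> G s) (at s within {0..})"
    proof (rule continuous_within_tendsto_compose[OF _ _ limc])
      show "continuous (at s within {0..}) G" using Gc s by (simp add: continuous_on_eq_continuous_within)
      show "\<forall>\<^sub>F y in at s within {0..}. c y \<in> {0..}"
        unfolding eventually_at_filter
        by (rule always_eventually) (use c s in \<open>force\<close>)
    qed
    have "((\<lambda>y. G (c y) * - ((\<phi> y - \<phi> s) / (y - s))) \<longlongrightarrow> G s * - \<phi>' s) (at s within {0..})"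
      by (intro tendsto_mult limG tendsto_minus lim\<phi>)
    moreover have "\<forall>\<^sub>F y in at s within {0..}. G (c y) * - ((\<phi> y - \<phi> s) / (y - s)) = (\<Psi> y - \<Psi> s) / (y - s)"
      unfolding eventually_at_filter
    proof (rule always_eventually, intro allI impI)
      fix y assume y: "y \<noteq> s" "y \<in> {0..}"
      then have h: "\<Psi> y - \<Psi> s = G (c y) * (\<phi> s - \<phi> y)" using c[of y] by auto
      have "y - s \<noteq> 0" using y by auto
      then show "G (c y) * - ((\<phi> y - \<phi> s) / (y - s)) = (\<Psi> y - \<Psi> s) / (y - s)"
        unfolding h by (simp add: field_simps)
    qed
    ultimately have "((\<lambda>y. (\<Psi> y - \<Psi> s) / (y - s)) \<longlongrightarrow> G s * - \<phi>' s) (at s within {0..})"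
      by (rule Lim_transform_eventually)
    then show ?thesis by (simp add: has_field_derivative_iff mult.commute)
  qed
  have cG: "continuous_on {0..} (\<lambda>s. \<phi>' s * G s)" by (intro continuous_intros \<phi>'c Gc)
  define \<Phi> where "\<Phi> s = \<Psi> s + integral {0..s} (\<lambda>x. \<phi>' x * G x)" for s
  have "(\<Phi> has_real_derivative 0) (at s within {0..})" if "s \<in> {0..}" for s
  proof -
    have "(\<Phi> has_real_derivative (- \<phi>' s * G s + \<phi>' s * G s)) (at s within {0..})"
      unfolding \<Phi>_def[abs_def] using that by (intro DERIV_add \<Psi>d deriv_integral_Ici cG) auto
    then show ?thesis by simp
  qed
  then obtain C where C: "\<And>s. s \<in> {0..} \<Longrightarrow> \<Phi> s = C"
    using has_field_derivative_zero_constant[of "{0::real..}" \<Phi>] by (auto simp: convex_real_interval)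
  have "\<Phi> t = \<Phi> 0" using C[of t] C[of 0] t by simp
  then have "integral {0..t} (\<lambda>x. \<phi> x * g x) = \<phi> t * G t - integral {0..t} (\<lambda>x. \<phi>' x * G x)"
    unfolding \<Phi>_def \<Psi>_def by (simp add: G0)
  then show ?thesis using \<phi>gi[of 0 t] t by (simp add: has_integral_integrable_integral)
qed


context ctx begin

definition R0 :: "(real \<Rightarrow> real) \<Rightarrow> real \<Rightarrow> real" where
  "R0 h t = exp (-(\<omega>^2) * t) * integral {0..t} (\<lambda>s. exp (\<omega>^2 * s) * h s)"

lemma integral_cont_Ici:
  fixes g :: "real \<Rightarrow> real"
  assumes g: "continuous_on {0..} g"
  shows "continuous_on {0..} (\<lambda>t. integral {0..t} g)"
  unfolding continuous_on_eq_continuous_within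
proof
  fix t :: real assume "t \<in> {0..}"
  then show "continuous (at t within {0..}) (\<lambda>t. integral {0..t} g)"
    using DERIV_continuous[OF deriv_integral_Ici[OF g, of t]] by auto
qed

lemma R0_cont: "continuous_on {0..} h \<Longrightarrow> continuous_on {0..} (R0 h)"
  unfolding R0_def[abs_def] by (intro continuous_intros integral_cont_Ici)

lemma x'_cont: "continuous_on {0..} x'"
proof (rule cont_Ici_from_Icc)
  fix T :: real assume T: "T \<ge> 0"
  let ?g = "\<lambda>s. f s - p s * x' s - \<omega>^2 * x s"
  have gi: "?g integrable_on {0..T}" using x'_eq[OF T] by blast
  have "continuous_on {0..T} (\<lambda>s. integral {0..s} ?g)" by (rule indefinite_integral_continuous_1[OF gi])
  then show "continuous_on {0..T} x'"
  proof (rule continuous_on_eq)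
    fix s assume "s \<in> {0..T}"
    then show "integral {0..s} ?g = x' s" using x'_eq[of s] by (auto simp: has_integral_integrable_integral)
  qed
qed

lemma exp_d: "((\<lambda>s. exp (\<omega>^2 * s)) has_real_derivative (\<omega>^2 * exp (\<omega>^2 * s))) (at s within S)"
proof -
  have "((\<lambda>s. exp (\<omega>^2 * s)) has_real_derivative exp (\<omega>^2 * s) * (\<omega>^2 * 1)) (at s within S)"
    by (intro derivative_eq_intros) auto
  then show ?thesis by (rule DERIV_cong) (simp add: algebra_simps)
qed

lemma exp_split: "exp (-(\<omega>^2) * (t - s)) = exp (-(\<omega>^2) * t) * exp (\<omega>^2 * s)"
  by (simp add: algebra_simps flip: exp_add)

lemma exp_split': "exp (- (\<omega>^2 * (t - s))) = exp (- (\<omega>^2 * t)) * exp (\<omega>^2 * s)"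
  by (simp add: algebra_simps flip: exp_add)

lemma y1_eq:
  assumes t: "t \<ge> 0"
  shows "y1fun \<omega> f t = x' t - \<omega>^2 * R0 x' t + R0 (\<lambda>s. p s * x' s + \<omega>^2 * x s) t"
proof -
  let ?g = "\<lambda>s. f s - p s * x' s - \<omega>^2 * x s"
  have bpi: "((\<lambda>s. exp (\<omega>^2 * s) * ?g s) has_integral
      (exp (\<omega>^2 * t) * x' t - integral {0..t} (\<lambda>s. \<omega>^2 * exp (\<omega>^2 * s) * x' s))) {0..t}"
  proof (rule bp[OF x'_eq x'_cont exp_d _ _ t])
    show "continuous_on {0..} (\<lambda>s. \<omega>^2 * exp (\<omega>^2 * s))" by (intro continuous_intros)
    show "exp (\<omega>^2 * s) \<le> exp (\<omega>^2 * t')" if "0 \<le> s" "s \<le> t'" for s t'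
      using that by (simp add: mult_left_mono)
  qed auto
  let ?h = "\<lambda>s. exp (\<omega>^2 * s) * (p s * x' s + \<omega>^2 * x s)"
  have hc: "continuous_on {0..} ?h" by (intro continuous_intros p_cont x'_cont x_cont)
  have hi: "(?h has_integral integral {0..t} ?h) {0..t}"
    using integrable_Ici'[OF hc, of 0 t] by (simp add: has_integral_integrable_integral)
  have "((\<lambda>s. exp (\<omega>^2 * s) * ?g s + ?h s) has_integral
     (exp (\<omega>^2 * t) * x' t - integral {0..t} (\<lambda>s. \<omega>^2 * exp (\<omega>^2 * s) * x' s) + integral {0..t} ?h)) {0..t}"
    by (rule has_integral_add[OF bpi hi])
  moreover have "(\<lambda>s. exp (\<omega>^2 * s) * ?g s + ?h s) = (\<lambda>s. exp (\<omega>^2 * s) * f s)"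
    by (rule ext) (simp add: algebra_simps)
  ultimately have I: "integral {0..t} (\<lambda>s. exp (\<omega>^2 * s) * f s) =
      exp (\<omega>^2 * t) * x' t - integral {0..t} (\<lambda>s. \<omega>^2 * exp (\<omega>^2 * s) * x' s) + integral {0..t} ?h"
    by (simp add: has_integral_integrable_integral)
  have I2: "integral {0..t} (\<lambda>s. \<omega>^2 * exp (\<omega>^2 * s) * x' s) = \<omega>^2 * integral {0..t} (\<lambda>s. exp (\<omega>^2 * s) * x' s)"
    by (simp add: mult.assoc)
  have "y1fun \<omega> f t = integral {0..t} (\<lambda>s. exp (-(\<omega>^2) * t) * (exp (\<omega>^2 * s) * f s))"
    unfolding y1fun_def by (intro integral_cong) (simp add: exp_split')
  also have "\<dots> = exp (-(\<omega>^2) * t) * integral {0..t} (\<lambda>s. exp (\<omega>^2 * s) * f s)"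
    by simp
  also have "\<dots> = exp (-(\<omega>^2) * t) * exp (\<omega>^2 * t) * x' t
      - \<omega>^2 * (exp (-(\<omega>^2) * t) * integral {0..t} (\<lambda>s. exp (\<omega>^2 * s) * x' s))
      + exp (-(\<omega>^2) * t) * integral {0..t} ?h"
    unfolding I I2 by (simp add: algebra_simps)
  also have "exp (-(\<omega>^2) * t) * exp (\<omega>^2 * t) = 1" by (simp flip: exp_add)
  finally show ?thesis unfolding R0_def by simp
qed

definition u where "u t = Afun p t * x t"
definition X where "X t = Afun p t * x' t"
definition V1 where "V1 = Rw u"
definition V2 where "V2 = Rw V1"
definition Y1 where "Y1 t = x' t - \<omega>^2 * R0 x' t + R0 (\<lambda>s. p s * x' s + \<omega>^2 * x s) t"

lemma u_cont: "continuous_on {0..} u" unfolding u_def[abs_def] by (intro continuous_intros A_cont x_cont)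
lemma X_cont: "continuous_on {0..} X" unfolding X_def[abs_def] by (intro continuous_intros A_cont x'_cont)
lemma V1_cont: "continuous_on {0..} V1" unfolding V1_def by (intro Rw_cont u_cont)
lemma V2_cont: "continuous_on {0..} V2" unfolding V2_def by (intro Rw_cont V1_cont)
lemma Y1_cont: "continuous_on {0..} Y1"
  unfolding Y1_def[abs_def] by (intro continuous_intros R0_cont x'_cont p_cont x_cont)

lemma A_R0:
  assumes h: "continuous_on {0..} h" and t: "t \<ge> 0"
  shows "Afun p t * R0 h t = Rw (\<lambda>s. Afun p s * h s) t"
proof -
  have "integral {0..t} (\<lambda>s. Afun p s * h s / E s) = integral {0..t} (\<lambda>s. exp (\<omega>^2 * s) * h s)"
  proof (rule integral_cong)
    fix s assume "s \<in> {0..t}"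
    have "Afun p s \<noteq> 0" using A_pos[of s] by simp
    then show "Afun p s * h s / E s = exp (\<omega>^2 * s) * h s"
      by (simp add: E_def exp_minus field_simps)
  qed
  then show ?thesis unfolding Rw_def R0_def E_def by (simp add: mult.assoc)
qed

lemma y2_eq: assumes t: "t \<ge> 0" shows "y2fun \<omega> f t = R0 Y1 t"
proof -
  have "y2fun \<omega> f t = integral {0..t} (\<lambda>s. exp (-(\<omega>^2) * t) * (exp (\<omega>^2 * s) * Y1 s))"
    unfolding y2fun_def
  proof (rule integral_cong)
    fix s assume "s \<in> {0..t}"
    then have "y1fun \<omega> f s = Y1 s" using y1_eq[of s] by (simp add: Y1_def)
    then show "exp (-(\<omega>^2) * (t - s)) * y1fun \<omega> f s = exp (-(\<omega>^2) * t) * (exp (\<omega>^2 * s) * Y1 s)"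
      by (simp add: exp_split')
  qed
  then show ?thesis by (simp add: R0_def)
qed

lemma u0: "u 0 = 0" by (simp add: u_def x0)

lemma u_deriv: assumes t: "t \<ge> 0"
  shows "(u has_real_derivative (X t + \<omega>^2 * u t - k t * u t)) (at t within {0..})"
proof -
  have "((\<lambda>t. Afun p t * x t) has_real_derivative (p t / 2 * Afun p t) * x t + x' t * Afun p t) (at t within {0..})"
    by (intro DERIV_mult A_deriv x_deriv t)
  then show ?thesis unfolding u_def[abs_def] by (rule DERIV_cong) (simp add: X_def u_def k_def algebra_simps)
qed

lemma I1: assumes t: "t \<ge> 0" shows "Rw X t = u t - \<omega>^2 * V1 t"
proof -
  have c: "continuous_on {0..} (\<lambda>s. X s + \<omega>^2 * u s)" by (intro continuous_intros X_cont u_cont)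
  have "u t = u 0 * E t + Rw (\<lambda>s. X s + \<omega>^2 * u s) t" by (rule Rw_unique[OF c u_deriv t])
  also have "\<dots> = Rw X t + \<omega>^2 * V1 t"
  proof -
    have cu: "continuous_on {0..} (\<lambda>s. \<omega>^2 * u s)" by (intro continuous_intros u_cont)
    show ?thesis unfolding Rw_add[OF X_cont cu t] Rw_cmult V1_def u0 by simp
  qed
  finally show ?thesis by simp
qed

lemma pu_cont: "continuous_on {0..} (\<lambda>s. p s * u s)" by (intro continuous_intros p_cont u_cont)
lemma p'u_cont: "continuous_on {0..} (\<lambda>s. p' s * u s)" by (intro continuous_intros p'_cont u_cont)
lemma pX_cont: "continuous_on {0..} (\<lambda>s. p s * X s)" by (intro continuous_intros p_cont X_cont)
lemma pV1_cont: "continuous_on {0..} (\<lambda>s. p s * V1 s)" by (intro continuous_intros p_cont V1_cont)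
lemma p'V1_cont: "continuous_on {0..} (\<lambda>s. p' s * V1 s)" by (intro continuous_intros p'_cont V1_cont)
lemma p'V2_cont: "continuous_on {0..} (\<lambda>s. p' s * V2 s)" by (intro continuous_intros p'_cont V2_cont)

lemma I2: assumes t: "t \<ge> 0"
  shows "p t * u t = Rw (\<lambda>s. p s * X s) t + Rw (\<lambda>s. p' s * u s) t + \<omega>^2 * Rw (\<lambda>s. p s * u s) t"
proof -
  have d: "((\<lambda>s. p s * u s) has_real_derivative
      ((p s * X s + p' s * u s + \<omega>^2 * (p s * u s)) - k s * (p s * u s))) (at s within {0..})" if s: "s \<ge> 0" for s
  proof -
    have "((\<lambda>s. p s * u s) has_real_derivative p' s * u s + (X s + \<omega>^2 * u s - k s * u s) * p s) (at s within {0..})"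
      by (intro DERIV_mult p_deriv u_deriv s)
    then show ?thesis by (rule DERIV_cong) (simp add: algebra_simps)
  qed
  have c: "continuous_on {0..} (\<lambda>s. p s * X s + p' s * u s + \<omega>^2 * (p s * u s))"
    by (intro continuous_intros p_cont p'_cont X_cont u_cont)
  have "p t * u t = p 0 * u 0 * E t + Rw (\<lambda>s. p s * X s + p' s * u s + \<omega>^2 * (p s * u s)) t"
    by (rule Rw_unique[OF c d t])
  also have "\<dots> = Rw (\<lambda>s. p s * X s + p' s * u s) t + Rw (\<lambda>s. \<omega>^2 * (p s * u s)) t"
  proof -
    have c12: "continuous_on {0..} (\<lambda>s. p s * X s + p' s * u s)" by (intro continuous_intros pX_cont p'u_cont)
    have c3: "continuous_on {0..} (\<lambda>s. \<omega>^2 * (p s * u s))" by (intro continuous_intros pu_cont)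
    show ?thesis unfolding Rw_add[OF c12 c3 t] u0 by simp
  qed
  also have "\<dots> = Rw (\<lambda>s. p s * X s) t + Rw (\<lambda>s. p' s * u s) t + \<omega>^2 * Rw (\<lambda>s. p s * u s) t"
    by (simp add: Rw_add[OF pX_cont p'u_cont t] Rw_cmult)
  finally show ?thesis .
qed

lemma pRw: assumes vc: "continuous_on {0..} v" and t: "t \<ge> 0"
  shows "p t * Rw v t = Rw (\<lambda>s. p' s * Rw v s) t + Rw (\<lambda>s. p s * v s) t"
proof -
  have d: "((\<lambda>s. p s * Rw v s) has_real_derivative
      ((p' s * Rw v s + p s * v s) - k s * (p s * Rw v s))) (at s within {0..})" if s: "s \<ge> 0" for s
  proof -
    have "((\<lambda>s. p s * Rw v s) has_real_derivative p' s * Rw v s + (v s - k s * Rw v s) * p s) (at s within {0..})"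
      by (intro DERIV_mult p_deriv Rw_deriv vc s)
    then show ?thesis by (rule DERIV_cong) (simp add: algebra_simps)
  qed
  have c1: "continuous_on {0..} (\<lambda>s. p' s * Rw v s)" by (intro continuous_intros p'_cont Rw_cont vc)
  have c2: "continuous_on {0..} (\<lambda>s. p s * v s)" by (intro continuous_intros p_cont vc)
  have "p t * Rw v t = p 0 * Rw v 0 * E t + Rw (\<lambda>s. p' s * Rw v s + p s * v s) t"
    by (rule Rw_unique[OF continuous_on_add[OF c1 c2] d t])
  then show ?thesis by (simp add: Rw0 Rw_add[OF c1 c2 t])
qed

end

context ctx begin

definition Z2 where
  "Z2 t = Rw X t - \<omega>^2 * V1 t + (\<omega>^4 + \<omega>^2) * V2 t + Rw (\<lambda>s. p s * u s) t
     - Rw (Rw (\<lambda>s. p' s * u s)) t - \<omega>^2 * Rw (Rw (\<lambda>s. p s * u s)) t"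

definition W1 where
  "W1 s = X s - \<omega>^2 * u s + (\<omega>^4 + \<omega>^2) * V1 s + p s * u s - Rw (\<lambda>s. p' s * u s) s - \<omega>^2 * Rw (\<lambda>s. p s * u s) s"

lemma W1_cont: "continuous_on {0..} W1"
  unfolding W1_def[abs_def]
  by (intro continuous_intros X_cont u_cont V1_cont p_cont Rw_cont p'u_cont pu_cont)

lemma AY1: assumes s: "s \<ge> 0" shows "Afun p s * Y1 s = W1 s"
proof -
  have e1: "Afun p s * R0 x' s = Rw X s"
    unfolding X_def[abs_def] by (rule A_R0[OF x'_cont s])
  have c: "continuous_on {0..} (\<lambda>s. p s * x' s + \<omega>^2 * x s)" by (intro continuous_intros p_cont x'_cont x_cont)
  have cu: "continuous_on {0..} (\<lambda>s. \<omega>^2 * u s)" by (intro continuous_intros u_cont)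
  have e2: "Afun p s * R0 (\<lambda>s. p s * x' s + \<omega>^2 * x s) s = Rw (\<lambda>r. p r * X r) s + \<omega>^2 * V1 s"
  proof -
    have "Afun p s * R0 (\<lambda>s. p s * x' s + \<omega>^2 * x s) s = Rw (\<lambda>r. Afun p r * (p r * x' r + \<omega>^2 * x r)) s"
      by (rule A_R0[OF c s])
    also have "\<dots> = Rw (\<lambda>r. p r * X r + \<omega>^2 * u r) s"
      by (rule Rw_cong[OF _ s]) (simp add: X_def u_def algebra_simps)
    also have "\<dots> = Rw (\<lambda>r. p r * X r) s + \<omega>^2 * V1 s"
      unfolding Rw_add[OF pX_cont cu s] Rw_cmult V1_def ..
    finally show ?thesis .
  qed
  have e3: "Rw X s = u s - \<omega>^2 * V1 s" by (rule I1[OF s])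
  have e4: "Rw (\<lambda>r. p r * X r) s = p s * u s - Rw (\<lambda>s. p' s * u s) s - \<omega>^2 * Rw (\<lambda>s. p s * u s) s"
    using I2[OF s] by linarith
  have "Afun p s * Y1 s = X s - \<omega>^2 * (Afun p s * R0 x' s) + Afun p s * R0 (\<lambda>s. p s * x' s + \<omega>^2 * x s) s"
    by (simp add: Y1_def X_def algebra_simps)
  also have "\<dots> = X s - \<omega>^2 * (u s - \<omega>^2 * V1 s) + (p s * u s - Rw (\<lambda>s. p' s * u s) s - \<omega>^2 * Rw (\<lambda>s. p s * u s) s + \<omega>^2 * V1 s)"
    unfolding e1 e2 e3 e4 ..
  also have "\<dots> = W1 s" by (simp add: W1_def algebra_simps power4_eq_xxxx power2_eq_square)
  finally show ?thesis .
qed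

lemma Z2_deriv: assumes t: "t \<ge> 0"
  shows "(Z2 has_real_derivative (W1 t - k t * Z2 t)) (at t within {0..})"
proof -
  have cRpu: "continuous_on {0..} (Rw (\<lambda>s. p s * u s))" by (intro Rw_cont pu_cont)
  have cRp'u: "continuous_on {0..} (Rw (\<lambda>s. p' s * u s))" by (intro Rw_cont p'u_cont)
  have "(Z2 has_real_derivative
      (X t - k t * Rw X t) - \<omega>^2 * (u t - k t * V1 t) + (\<omega>^4 + \<omega>^2) * (V1 t - k t * V2 t)
      + (p t * u t - k t * Rw (\<lambda>s. p s * u s) t)
      - (Rw (\<lambda>s. p' s * u s) t - k t * Rw (Rw (\<lambda>s. p' s * u s)) t)
      - \<omega>^2 * (Rw (\<lambda>s. p s * u s) t - k t * Rw (Rw (\<lambda>s. p s * u s)) t)) (at t within {0..})"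
    unfolding Z2_def[abs_def] V1_def V2_def
    by (intro DERIV_add DERIV_diff DERIV_cmult Rw_deriv X_cont u_cont V1_cont[unfolded V1_def] pu_cont p'u_cont cRpu cRp'u t)
  then show ?thesis by (rule DERIV_cong) (simp add: Z2_def W1_def algebra_simps)
qed

lemma Ay2: assumes t: "t \<ge> 0" shows "Afun p t * y2fun \<omega> f t = Z2 t"
proof -
  have "Afun p t * y2fun \<omega> f t = Afun p t * R0 Y1 t" by (simp add: y2_eq[OF t])
  also have "\<dots> = Rw (\<lambda>s. Afun p s * Y1 s) t" by (rule A_R0[OF Y1_cont t])
  also have "\<dots> = Rw W1 t" by (rule Rw_cong[OF _ t]) (simp add: AY1)
  also have "\<dots> = Z2 t"
    using Rw_unique[OF W1_cont Z2_deriv t] by (simp add: Z2_def Rw0 V1_def V2_def)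
  finally show ?thesis .
qed

definition Xi where
  "Xi t = Rw (\<lambda>s. p' s * V1 s) t + ((p t)^2 / 4 + p' t / 2) * V2 t + Rw (Rw (\<lambda>s. p' s * u s)) t
     - \<omega>^2 * Rw (\<lambda>s. p' s * V2 s) t - \<omega>^2 * Rw (Rw (\<lambda>s. p' s * V1 s)) t"

lemma Xi_eq: assumes t: "t \<ge> 0"
  shows "Afun p t * y2fun \<omega> f t = u t - 2 * k t * V1 t + ((k t)^2 + \<omega>^2 + p' t / 2) * V2 t - Xi t"
proof -
  have e1: "Rw X t = u t - \<omega>^2 * V1 t" by (rule I1[OF t])
  have e2: "Rw (\<lambda>s. p s * u s) t = p t * V1 t - Rw (\<lambda>s. p' s * V1 s) t"
    using pRw[OF u_cont t] unfolding V1_def by linarith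
  have e3a: "Rw (\<lambda>s. p s * V1 s) t = Rw (Rw (\<lambda>s. p' s * V1 s)) t + Rw (Rw (\<lambda>s. p s * u s)) t"
  proof -
    have "Rw (\<lambda>s. p s * V1 s) t = Rw (\<lambda>s. Rw (\<lambda>s. p' s * V1 s) s + Rw (\<lambda>s. p s * u s) s) t"
      by (rule Rw_cong[OF _ t]) (use pRw[OF u_cont] in \<open>simp add: V1_def\<close>)
    also have "\<dots> = Rw (Rw (\<lambda>s. p' s * V1 s)) t + Rw (Rw (\<lambda>s. p s * u s)) t"
      by (rule Rw_add[OF Rw_cont[OF p'V1_cont] Rw_cont[OF pu_cont] t])
    finally show ?thesis .
  qed
  have e3b: "p t * V2 t = Rw (\<lambda>s. p' s * V2 s) t + Rw (\<lambda>s. p s * V1 s) t"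
    using pRw[OF V1_cont t] unfolding V2_def .
  have e3: "Rw (Rw (\<lambda>s. p s * u s)) t = p t * V2 t - Rw (\<lambda>s. p' s * V2 s) t - Rw (Rw (\<lambda>s. p' s * V1 s)) t"
    using e3a e3b by linarith
  show ?thesis
    unfolding Ay2[OF t] Z2_def e1 e2 e3 Xi_def k_def
    by (simp add: algebra_simps power2_eq_square power4_eq_xxxx)
qed

end

lemma l1_mult_bounded':
  assumes "l1 h" "continuous_on {0..} b" "\<And>t. t \<ge> 0 \<Longrightarrow> \<bar>b t\<bar> \<le> M"
  shows "l1 (\<lambda>t. h t * b t)"
  using l1_mult_bounded[OF assms] by (simp add: mult.commute)

lemma conv_from:
  fixes F G H :: "real \<Rightarrow> real"
  assumes eq: "\<And>T. T \<ge> 0 \<Longrightarrow> integral {0..T} F = G T - G 0 - integral {0..T} H"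
    and G: "(G \<longlongrightarrow> g) at_top" and H: "l1 H"
  shows "\<exists>L. ((\<lambda>T. integral {0..T} F) \<longlongrightarrow> L) at_top"
proof -
  obtain LH where LH: "((\<lambda>T. integral {0..T} H) \<longlongrightarrow> LH) at_top" using l1_conv[OF H] by blast
  have "((\<lambda>T. G T - G 0 - integral {0..T} H) \<longlongrightarrow> g - G 0 - LH) at_top"
    by (intro tendsto_diff G LH tendsto_const)
  moreover have "\<forall>\<^sub>F T in at_top. G T - G 0 - integral {0..T} H = integral {0..T} F"
    unfolding eventually_at_top_linorder by (intro exI[of _ 0] allI impI, rule eq[symmetric])
  ultimately have "((\<lambda>T. integral {0..T} F) \<longlongrightarrow> g - G 0 - LH) at_top"
    by (rule Lim_transform_eventually)
  then show ?thesis by blast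
qed

context ctx begin

lemma cont_conv_bounded:
  assumes gc: "continuous_on {0..} g" and gl: "((\<lambda>t. g t - trig a b t) \<longlongrightarrow> 0) at_top"
  shows "\<exists>M. \<forall>t\<ge>0. \<bar>g t\<bar> \<le> M"
proof -
  obtain N where N: "\<And>t. t \<ge> N \<Longrightarrow> \<bar>g t - trig a b t\<bar> < 1"
    using tendstoD[OF gl, of 1] by (auto simp: eventually_at_top_linorder dist_real_def)
  have "compact (g ` {0..max N 0})"
    by (rule compact_continuous_image[OF continuous_on_subset[OF gc] compact_Icc]) auto
  then obtain a0 where a0: "\<And>y. y \<in> g ` {0..max N 0} \<Longrightarrow> \<bar>y\<bar> \<le> a0"
    using compact_imp_bounded bounded_real by metis
  have "\<bar>g t\<bar> \<le> max a0 (\<bar>a\<bar> + \<bar>b\<bar> + 1)" if t: "t \<ge> 0" for t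
  proof (cases "t \<le> max N 0")
    case True then show ?thesis using a0[of "g t"] t by force
  next
    case False
    then have "\<bar>g t - trig a b t\<bar> < 1" using N by auto
    moreover have "\<bar>trig a b t\<bar> \<le> \<bar>a\<bar> + \<bar>b\<bar>" by (rule trig_bound)
    ultimately show ?thesis by linarith
  qed
  then show ?thesis by blast
qed

lemma k_deriv: "(k has_real_derivative (- p' t / 2)) (at t within {0..})" if t: "t \<ge> 0" for t
proof -
  have "((\<lambda>t. \<omega>^2 - p t / 2) has_real_derivative (0 - p' t / 2)) (at t within {0..})"
    by (intro DERIV_diff DERIV_const DERIV_cdivide p_deriv t)
  then show ?thesis unfolding k_def[abs_def] by simp
qed

lemma cos_d: "((\<lambda>t. cos (\<omega> * t)) has_real_derivative (- \<omega> * sin (\<omega> * t))) (at t within S)"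
proof -
  have "((\<lambda>t. cos (\<omega> * t)) has_real_derivative - sin (\<omega> * t) * (\<omega> * 1)) (at t within S)"
    by (intro derivative_eq_intros) auto
  then show ?thesis by (rule DERIV_cong) simp
qed

lemma sin_d: "((\<lambda>t. sin (\<omega> * t)) has_real_derivative (\<omega> * cos (\<omega> * t))) (at t within S)"
proof -
  have "((\<lambda>t. sin (\<omega> * t)) has_real_derivative cos (\<omega> * t) * (\<omega> * 1)) (at t within S)"
    by (intro derivative_eq_intros) auto
  then show ?thesis by (rule DERIV_cong) simp
qed

definition Q where "Q t = u t - 2 * k t * V1 t + ((k t)^2 + \<omega>^2 + p' t / 2) * V2 t"
definition Gc where "Gc t = cos (\<omega> * t) * (V1 t - k t * V2 t) + \<omega> * sin (\<omega> * t) * V2 t"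
definition Gs where "Gs t = sin (\<omega> * t) * (V1 t - k t * V2 t) - \<omega> * cos (\<omega> * t) * V2 t"

lemma V1_deriv: "t \<ge> 0 \<Longrightarrow> (V1 has_real_derivative (u t - k t * V1 t)) (at t within {0..})"
  unfolding V1_def by (rule Rw_deriv[OF u_cont])
lemma V2_deriv: "t \<ge> 0 \<Longrightarrow> (V2 has_real_derivative (V1 t - k t * V2 t)) (at t within {0..})"
  unfolding V2_def by (rule Rw_deriv[OF V1_cont])

lemma W_deriv: assumes t: "t \<ge> 0"
  shows "((\<lambda>t. V1 t - k t * V2 t) has_real_derivative
     ((u t - k t * V1 t) - ((- p' t / 2) * V2 t + (V1 t - k t * V2 t) * k t))) (at t within {0..})"
  by (intro DERIV_diff DERIV_mult V1_deriv V2_deriv k_deriv t)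

lemma Gc_deriv: assumes t: "t \<ge> 0"
  shows "(Gc has_real_derivative (cos (\<omega> * t) * Q t)) (at t within {0..})"
proof -
  have "(Gc has_real_derivative
      ((- \<omega> * sin (\<omega> * t)) * (V1 t - k t * V2 t) + ((u t - k t * V1 t) - ((- p' t / 2) * V2 t + (V1 t - k t * V2 t) * k t)) * cos (\<omega> * t))
      + (\<omega> * (\<omega> * cos (\<omega> * t)) * V2 t + (V1 t - k t * V2 t) * (\<omega> * sin (\<omega> * t)))) (at t within {0..})"
    unfolding Gc_def[abs_def]
    by (intro DERIV_add DERIV_mult DERIV_cmult cos_d sin_d W_deriv V2_deriv t)
  then show ?thesis by (rule DERIV_cong) (simp add: Q_def algebra_simps power2_eq_square)
qed

lemma Gs_deriv: assumes t: "t \<ge> 0"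
  shows "(Gs has_real_derivative (sin (\<omega> * t) * Q t)) (at t within {0..})"
proof -
  have "(Gs has_real_derivative
      ((\<omega> * cos (\<omega> * t)) * (V1 t - k t * V2 t) + ((u t - k t * V1 t) - ((- p' t / 2) * V2 t + (V1 t - k t * V2 t) * k t)) * sin (\<omega> * t))
      - (\<omega> * (- \<omega> * sin (\<omega> * t)) * V2 t + (V1 t - k t * V2 t) * (\<omega> * cos (\<omega> * t)))) (at t within {0..})"
    unfolding Gs_def[abs_def]
    by (intro DERIV_add DERIV_diff DERIV_mult DERIV_cmult cos_d sin_d W_deriv V2_deriv t)
  then show ?thesis by (rule DERIV_cong) (simp add: Q_def algebra_simps power2_eq_square)
qed

lemma Q_cont: "continuous_on {0..} Q"
  unfolding Q_def[abs_def] by (intro continuous_intros u_cont V1_cont V2_cont k_cont p'_cont) auto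

lemma Xi_cont: "continuous_on {0..} Xi"
  unfolding Xi_def[abs_def]
  by (intro continuous_intros Rw_cont p'V1_cont V2_cont p_cont p'_cont p'u_cont p'V2_cont V1_cont u_cont) auto

lemma int_identity:
  fixes G :: "real \<Rightarrow> real" and c :: "real \<Rightarrow> real"
  assumes Gd: "\<And>t. t \<ge> 0 \<Longrightarrow> (G has_real_derivative (c t * Q t)) (at t within {0..})"
    and cc: "continuous_on {0..} c"
    and T: "T \<ge> 0"
  shows "integral {0..T} (\<lambda>t. Afun p t * c t * y2fun \<omega> f t) = G T - G 0 - integral {0..T} (\<lambda>t. c t * Xi t)"
proof -
  have ftc: "((\<lambda>t. c t * Q t) has_integral (G T - G 0)) {0..T}"
  proof (rule fundamental_theorem_of_calculus[OF T])
    fix t assume t: "t \<in> {0..T}"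
    have "(G has_real_derivative (c t * Q t)) (at t within {0..T})"
      by (rule has_field_derivative_subset[OF Gd]) (use t in auto)
    then show "(G has_vector_derivative (c t * Q t)) (at t within {0..T})"
      by (simp add: has_real_derivative_iff_has_vector_derivative)
  qed
  have cX: "continuous_on {0..} (\<lambda>t. c t * Xi t)" by (intro continuous_intros cc Xi_cont)
  have hX: "((\<lambda>t. c t * Xi t) has_integral integral {0..T} (\<lambda>t. c t * Xi t)) {0..T}"
    using integrable_Ici'[OF cX, of 0 T] by (simp add: has_integral_integrable_integral)
  have "((\<lambda>t. c t * Q t - c t * Xi t) has_integral (G T - G 0 - integral {0..T} (\<lambda>t. c t * Xi t))) {0..T}"
    by (rule has_integral_diff[OF ftc hX])
  then have "((\<lambda>t. Afun p t * c t * y2fun \<omega> f t) has_integral (G T - G 0 - integral {0..T} (\<lambda>t. c t * Xi t))) {0..T}"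
  proof (rule has_integral_eq[rotated])
    fix t assume "t \<in> {0..T}"
    then have h: "Afun p t * y2fun \<omega> f t = Q t - Xi t" using Xi_eq[of t] by (simp add: Q_def)
    have "c t * Q t - c t * Xi t = c t * (Q t - Xi t)" by (simp add: algebra_simps)
    also have "\<dots> = c t * (Afun p t * y2fun \<omega> f t)" unfolding h ..
    also have "\<dots> = Afun p t * c t * y2fun \<omega> f t" by simp
    finally show "c t * Q t - c t * Xi t = Afun p t * c t * y2fun \<omega> f t" .
  qed
  then show ?thesis by (rule integral_unique)
qed

end

context ctx begin

lemma final_loc:
  assumes ul: "((\<lambda>t. u t - trig c1 c2 t) \<longlongrightarrow> 0) at_top"
  shows "(\<exists>L. ((\<lambda>T. integral {0..T} (\<lambda>t. Afun p t * sin (\<omega> * t) * y2fun \<omega> f t)) \<longlongrightarrow> L) at_top)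
       \<and> (\<exists>L. ((\<lambda>T. integral {0..T} (\<lambda>t. Afun p t * cos (\<omega> * t) * y2fun \<omega> f t)) \<longlongrightarrow> L) at_top)"
proof -
  obtain Mu where Mu: "\<And>t. t \<ge> 0 \<Longrightarrow> \<bar>u t\<bar> \<le> Mu" using cont_conv_bounded[OF u_cont ul] by blast
  obtain a1 b1 where ab1: "\<omega>^2 * a1 + \<omega> * b1 = c1" "\<omega>^2 * b1 - \<omega> * a1 = c2"
    and l1': "((\<lambda>t. Rw u t - trig a1 b1 t) \<longlongrightarrow> 0) at_top"
    using Rw_trig[OF u_cont ul] by blast
  have V1l: "((\<lambda>t. V1 t - trig a1 b1 t) \<longlongrightarrow> 0) at_top" using l1' by (simp add: V1_def)
  obtain a2 b2 where ab2: "\<omega>^2 * a2 + \<omega> * b2 = a1" "\<omega>^2 * b2 - \<omega> * a2 = b1"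
    and l2': "((\<lambda>t. Rw V1 t - trig a2 b2 t) \<longlongrightarrow> 0) at_top"
    using Rw_trig[OF V1_cont V1l] by blast
  have V2l: "((\<lambda>t. V2 t - trig a2 b2 t) \<longlongrightarrow> 0) at_top" using l2' by (simp add: V2_def)
  have V1b: "\<And>t. t \<ge> 0 \<Longrightarrow> \<bar>V1 t\<bar> \<le> Kc * Mu / cc" unfolding V1_def by (rule Rw_bounded[OF u_cont Mu])
  have V2b: "\<And>t. t \<ge> 0 \<Longrightarrow> \<bar>V2 t\<bar> \<le> Kc * (Kc * Mu / cc) / cc" unfolding V2_def by (rule Rw_bounded[OF V1_cont V1b])
  have lp'u: "l1 (\<lambda>s. p' s * u s)" by (rule l1_mult_bounded'[OF l1_p' u_cont Mu])
  have lp'V1: "l1 (\<lambda>s. p' s * V1 s)" by (rule l1_mult_bounded'[OF l1_p' V1_cont V1b])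
  have lp'V2: "l1 (\<lambda>s. p' s * V2 s)" by (rule l1_mult_bounded'[OF l1_p' V2_cont V2b])
  have lcoef: "l1 (\<lambda>t. (p t)^2 / 4 + p' t / 2)"
  proof -
    have "l1 (\<lambda>t. (1/4) * (p t)^2 + (1/2) * p' t)" by (intro l1_add l1_cmult l1_psq l1_p')
    moreover have "(\<lambda>t. (1/4) * (p t)^2 + (1/2) * p' t) = (\<lambda>t. (p t)^2 / 4 + p' t / 2)" by (rule ext) simp
    ultimately show ?thesis by simp
  qed
  have lXi: "l1 Xi"
  proof -
    have "l1 (\<lambda>t. Rw (\<lambda>s. p' s * V1 s) t + ((p t)^2 / 4 + p' t / 2) * V2 t + Rw (Rw (\<lambda>s. p' s * u s)) t
        - \<omega>^2 * Rw (\<lambda>s. p' s * V2 s) t - \<omega>^2 * Rw (Rw (\<lambda>s. p' s * V1 s)) t)"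
      by (intro l1_add l1_diff l1_cmult l1_Rw lp'u lp'V1 lp'V2 l1_mult_bounded'[OF lcoef V2_cont V2b])
    moreover have "(\<lambda>t. Rw (\<lambda>s. p' s * V1 s) t + ((p t)^2 / 4 + p' t / 2) * V2 t + Rw (Rw (\<lambda>s. p' s * u s)) t
        - \<omega>^2 * Rw (\<lambda>s. p' s * V2 s) t - \<omega>^2 * Rw (Rw (\<lambda>s. p' s * V1 s)) t) = Xi"
      by (rule ext) (simp add: Xi_def)
    ultimately show ?thesis by simp
  qed
  have kl: "(k \<longlongrightarrow> \<omega>^2) at_top"
  proof -
    have "((\<lambda>t. \<omega>^2 - p t / 2) \<longlongrightarrow> \<omega>^2 - 0 / 2) at_top"
      by (intro tendsto_diff tendsto_const tendsto_divide p_lim) auto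
    then show ?thesis by (simp add: k_def[abs_def])
  qed
  have kb: "\<forall>\<^sub>F t in at_top. \<bar>k t\<bar> \<le> \<omega>^2 + 1"
  proof -
    have "\<forall>\<^sub>F t in at_top. dist (k t) (\<omega>^2) < 1" using tendstoD[OF kl, of 1] by simp
    then show ?thesis
    proof eventually_elim
      case (elim t)
      have "\<omega>^2 \<ge> 0" by simp
      then show ?case using elim unfolding dist_real_def abs_less_iff abs_le_iff by linarith
    qed
  qed
  have k0: "((\<lambda>t. k t - \<omega>^2) \<longlongrightarrow> 0) at_top" by (rule LIM_zero[OF kl])
  have w0: "\<omega> \<ge> 0" using omega_pos by simp
  have kcb: "\<forall>\<^sub>F t in at_top. \<bar>k t * c t\<bar> \<le> \<omega>^2 + 1" if "\<And>t. \<bar>c t\<bar> \<le> 1" for c :: "real \<Rightarrow> real"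
    using kb
  proof eventually_elim
    case (elim t)
    have "\<bar>k t * c t\<bar> = \<bar>k t\<bar> * \<bar>c t\<bar>" by (simp add: abs_mult)
    also have "\<dots> \<le> (\<omega>^2 + 1) * 1" using elim that[of t] by (intro mult_mono) auto
    finally show ?case by simp
  qed
  have wb: "\<forall>\<^sub>F t in at_top. \<bar>\<omega> * c t\<bar> \<le> \<omega>" if "\<And>t. \<bar>c t\<bar> \<le> 1" for c :: "real \<Rightarrow> real"
    using that w0 by (auto simp: abs_mult intro!: always_eventually mult_left_le)
  have tb: "\<forall>\<^sub>F t in at_top. \<bar>c t * trig a2 b2 t\<bar> \<le> \<bar>a2\<bar> + \<bar>b2\<bar>" if "\<And>t. \<bar>c t\<bar> \<le> 1" for c :: "real \<Rightarrow> real"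
  proof (rule always_eventually, rule allI)
    fix t
    have "\<bar>c t * trig a2 b2 t\<bar> = \<bar>c t\<bar> * \<bar>trig a2 b2 t\<bar>" by (simp add: abs_mult)
    also have "\<dots> \<le> 1 * (\<bar>a2\<bar> + \<bar>b2\<bar>)" using that[of t] trig_bound[of a2 b2 t] by (intro mult_mono) auto
    finally show "\<bar>c t * trig a2 b2 t\<bar> \<le> \<bar>a2\<bar> + \<bar>b2\<bar>" by simp
  qed
  have one: "\<forall>\<^sub>F t in at_top. \<bar>c t\<bar> \<le> 1" if "\<And>t. \<bar>c t\<bar> \<le> 1" for c :: "real \<Rightarrow> real"
    using that by (auto intro: always_eventually)
  have cos1: "\<And>t. \<bar>cos (\<omega> * t)\<bar> \<le> 1" by simp
  have sin1: "\<And>t. \<bar>sin (\<omega> * t)\<bar> \<le> 1" by simp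
  have Gcl: "(Gc \<longlongrightarrow> \<omega> * b2) at_top"
  proof -
    have T1: "((\<lambda>t. cos (\<omega> * t) * (V1 t - trig a1 b1 t)) \<longlongrightarrow> 0) at_top"
      by (rule bounded_times_null[OF V1l one[OF cos1]])
    have T2: "((\<lambda>t. (k t * cos (\<omega> * t)) * (V2 t - trig a2 b2 t)) \<longlongrightarrow> 0) at_top"
      by (rule bounded_times_null[OF V2l kcb[OF cos1]])
    have T3: "((\<lambda>t. (cos (\<omega> * t) * trig a2 b2 t) * (k t - \<omega>^2)) \<longlongrightarrow> 0) at_top"
      by (rule bounded_times_null[OF k0 tb[OF cos1]])
    have T4: "((\<lambda>t. (\<omega> * sin (\<omega> * t)) * (V2 t - trig a2 b2 t)) \<longlongrightarrow> 0) at_top"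
      by (rule bounded_times_null[OF V2l wb[OF sin1]])
    have br: "cos (\<omega> * t) * trig a1 b1 t - \<omega>^2 * (cos (\<omega> * t) * trig a2 b2 t) + \<omega> * sin (\<omega> * t) * trig a2 b2 t = \<omega> * b2" for t
    proof -
      have "cos (\<omega> * t) * trig a1 b1 t - \<omega>^2 * (cos (\<omega> * t) * trig a2 b2 t) + \<omega> * sin (\<omega> * t) * trig a2 b2 t
          = \<omega> * b2 * ((sin (\<omega> * t))^2 + (cos (\<omega> * t))^2)"
        unfolding trig_def ab2[symmetric] by algebra
      also have "\<dots> = \<omega> * b2" by (simp only: sin_cos_squared_add mult_1_right)
      finally show ?thesis .
    qed
    have eq: "cos (\<omega> * t) * (V1 t - trig a1 b1 t) - (k t * cos (\<omega> * t)) * (V2 t - trig a2 b2 t)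
        - (cos (\<omega> * t) * trig a2 b2 t) * (k t - \<omega>^2) + (\<omega> * sin (\<omega> * t)) * (V2 t - trig a2 b2 t) + \<omega> * b2 = Gc t" for t
    proof -
      have "cos (\<omega> * t) * (V1 t - trig a1 b1 t) - (k t * cos (\<omega> * t)) * (V2 t - trig a2 b2 t)
        - (cos (\<omega> * t) * trig a2 b2 t) * (k t - \<omega>^2) + (\<omega> * sin (\<omega> * t)) * (V2 t - trig a2 b2 t)
        = Gc t - (cos (\<omega> * t) * trig a1 b1 t - \<omega>^2 * (cos (\<omega> * t) * trig a2 b2 t) + \<omega> * sin (\<omega> * t) * trig a2 b2 t)"
        by (simp add: Gc_def algebra_simps)
      then show ?thesis unfolding br by simp
    qed
    have "((\<lambda>t. cos (\<omega> * t) * (V1 t - trig a1 b1 t) - (k t * cos (\<omega> * t)) * (V2 t - trig a2 b2 t)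
        - (cos (\<omega> * t) * trig a2 b2 t) * (k t - \<omega>^2) + (\<omega> * sin (\<omega> * t)) * (V2 t - trig a2 b2 t) + \<omega> * b2)
        \<longlongrightarrow> 0 - 0 - 0 + 0 + \<omega> * b2) at_top"
      by (intro tendsto_add tendsto_diff T1 T2 T3 T4 tendsto_const)
    then show ?thesis unfolding eq by simp
  qed
  have Gsl: "(Gs \<longlongrightarrow> - \<omega> * a2) at_top"
  proof -
    have T1: "((\<lambda>t. sin (\<omega> * t) * (V1 t - trig a1 b1 t)) \<longlongrightarrow> 0) at_top"
      by (rule bounded_times_null[OF V1l one[OF sin1]])
    have T2: "((\<lambda>t. (k t * sin (\<omega> * t)) * (V2 t - trig a2 b2 t)) \<longlongrightarrow> 0) at_top"
      by (rule bounded_times_null[OF V2l kcb[OF sin1]])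
    have T3: "((\<lambda>t. (sin (\<omega> * t) * trig a2 b2 t) * (k t - \<omega>^2)) \<longlongrightarrow> 0) at_top"
      by (rule bounded_times_null[OF k0 tb[OF sin1]])
    have T4: "((\<lambda>t. (\<omega> * cos (\<omega> * t)) * (V2 t - trig a2 b2 t)) \<longlongrightarrow> 0) at_top"
      by (rule bounded_times_null[OF V2l wb[OF cos1]])
    have br: "sin (\<omega> * t) * trig a1 b1 t - \<omega>^2 * (sin (\<omega> * t) * trig a2 b2 t) - \<omega> * cos (\<omega> * t) * trig a2 b2 t = - \<omega> * a2" for t
    proof -
      have "sin (\<omega> * t) * trig a1 b1 t - \<omega>^2 * (sin (\<omega> * t) * trig a2 b2 t) - \<omega> * cos (\<omega> * t) * trig a2 b2 t
          = - \<omega> * a2 * ((sin (\<omega> * t))^2 + (cos (\<omega> * t))^2)"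
        unfolding trig_def ab2[symmetric] by algebra
      also have "\<dots> = - \<omega> * a2" by (simp only: sin_cos_squared_add mult_1_right)
      finally show ?thesis .
    qed
    have eq: "sin (\<omega> * t) * (V1 t - trig a1 b1 t) - (k t * sin (\<omega> * t)) * (V2 t - trig a2 b2 t)
        - (sin (\<omega> * t) * trig a2 b2 t) * (k t - \<omega>^2) - (\<omega> * cos (\<omega> * t)) * (V2 t - trig a2 b2 t) + (- \<omega> * a2) = Gs t" for t
    proof -
      have "sin (\<omega> * t) * (V1 t - trig a1 b1 t) - (k t * sin (\<omega> * t)) * (V2 t - trig a2 b2 t)
        - (sin (\<omega> * t) * trig a2 b2 t) * (k t - \<omega>^2) - (\<omega> * cos (\<omega> * t)) * (V2 t - trig a2 b2 t)
        = Gs t - (sin (\<omega> * t) * trig a1 b1 t - \<omega>^2 * (sin (\<omega> * t) * trig a2 b2 t) - \<omega> * cos (\<omega> * t) * trig a2 b2 t)"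
        by (simp add: Gs_def algebra_simps)
      then show ?thesis unfolding br by simp
    qed
    have "((\<lambda>t. sin (\<omega> * t) * (V1 t - trig a1 b1 t) - (k t * sin (\<omega> * t)) * (V2 t - trig a2 b2 t)
        - (sin (\<omega> * t) * trig a2 b2 t) * (k t - \<omega>^2) - (\<omega> * cos (\<omega> * t)) * (V2 t - trig a2 b2 t) + (- \<omega> * a2))
        \<longlongrightarrow> 0 - 0 - 0 - 0 + (- \<omega> * a2)) at_top"
      by (intro tendsto_add tendsto_diff T1 T2 T3 T4 tendsto_const)
    then show ?thesis unfolding eq by simp
  qed
  have cc: "continuous_on {0..} (\<lambda>t. cos (\<omega> * t))" by (intro continuous_intros)
  have sc: "continuous_on {0..} (\<lambda>t. sin (\<omega> * t))" by (intro continuous_intros)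
  have "\<exists>L. ((\<lambda>T. integral {0..T} (\<lambda>t. Afun p t * sin (\<omega> * t) * y2fun \<omega> f t)) \<longlongrightarrow> L) at_top"
    by (rule conv_from[OF int_identity[OF Gs_deriv sc] Gsl l1_mult_bounded[OF lXi sc sin1]])
  moreover have "\<exists>L. ((\<lambda>T. integral {0..T} (\<lambda>t. Afun p t * cos (\<omega> * t) * y2fun \<omega> f t)) \<longlongrightarrow> L) at_top"
    by (rule conv_from[OF int_identity[OF Gc_deriv cc] Gcl l1_mult_bounded[OF lXi cc cos1]])
  ultimately show ?thesis ..
qed

end

theorem mainTheorem20:
  fixes \<omega> :: real and p p' f x x' :: "real \<Rightarrow> real"
  assumes omega_pos: "\<omega> > 0"
    and p_deriv: "\<And>t. t \<ge> 0 \<Longrightarrow> (p has_real_derivative p' t) (at t within {0..})"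
    and p'_cont: "continuous_on {0..} p'"
    and p_pos: "\<And>t. t \<ge> 0 \<Longrightarrow> p t > 0"
    and p'_neg: "\<And>t. t \<ge> 0 \<Longrightarrow> p' t < 0"
    and p_int_div: "filterlim (\<lambda>T. integral {0..T} p) at_top at_top"
    and p_sq_int: "(\<lambda>t. (p t)^2) integrable_on {0..}"
    and f_loc: "\<And>T. T \<ge> 0 \<Longrightarrow> f absolutely_integrable_on {0..T}"
    and x_deriv: "\<And>t. t \<ge> 0 \<Longrightarrow> (x has_real_derivative x' t) (at t within {0..})"
    and x'_eq: "\<And>t. t \<ge> 0 \<Longrightarrow>
        ((\<lambda>s. f s - p s * x' s - \<omega>^2 * x s) has_integral x' t) {0..t}"
    and x0: "x 0 = 0"
    and p'_lim: "(p' \<longlongrightarrow> 0) at_top"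
    and y2_small: "y2fun \<omega> f \<in> o[at_top](\<lambda>t. 1 / Afun p t)"
    and x_asym: "\<exists>c1 c2. (\<lambda>t. x t - (c1 * cos (\<omega> * t) + c2 * sin (\<omega> * t)) / Afun p t)
                    \<in> o[at_top](\<lambda>t. 1 / Afun p t)"
  shows "(\<exists>L. ((\<lambda>T. integral {0..T} (\<lambda>t. Afun p t * sin (\<omega> * t) * y2fun \<omega> f t))
              \<longlongrightarrow> L) at_top)
       \<and> (\<exists>L. ((\<lambda>T. integral {0..T} (\<lambda>t. Afun p t * cos (\<omega> * t) * y2fun \<omega> f t))
              \<longlongrightarrow> L) at_top)"
proof -
  interpret C: ctx \<omega> p p' f x x'
    by (unfold_locales) (use omega_pos p_deriv p'_cont p_pos p'_neg p_sq_int f_loc x_deriv x'_eq x0 in auto)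
  obtain c1 c2 where asym: "(\<lambda>t. x t - (c1 * cos (\<omega> * t) + c2 * sin (\<omega> * t)) / Afun p t) \<in> o[at_top](\<lambda>t. 1 / Afun p t)"
    using x_asym by blast
  have "((\<lambda>t. C.u t - C.trig c1 c2 t) \<longlongrightarrow> 0) at_top"
  proof (rule tendstoI)
    fix e :: real assume e: "e > 0"
    have "\<forall>\<^sub>F t in at_top. norm (x t - (c1 * cos (\<omega> * t) + c2 * sin (\<omega> * t)) / Afun p t) \<le> (e/2) * norm (1 / Afun p t)"
      using landau_o.smallD[OF asym, of "e/2"] e by simp
    then show "\<forall>\<^sub>F t in at_top. dist (C.u t - C.trig c1 c2 t) 0 < e"
    proof eventually_elim
      case (elim t)
      have A: "Afun p t > 0" by (rule C.A_pos)
      have "C.u t - C.trig c1 c2 t = Afun p t * (x t - (c1 * cos (\<omega> * t) + c2 * sin (\<omega> * t)) / Afun p t)"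
        using A by (simp add: C.u_def C.trig_def field_simps)
      then have "\<bar>C.u t - C.trig c1 c2 t\<bar> = Afun p t * \<bar>x t - (c1 * cos (\<omega> * t) + c2 * sin (\<omega> * t)) / Afun p t\<bar>"
        using A by (simp add: abs_mult)
      also have "\<dots> \<le> Afun p t * ((e/2) * (1 / Afun p t))"
        using elim A by (intro mult_left_mono) auto
      also have "\<dots> = e / 2" using A by simp
      finally show ?case using e by (simp add: dist_real_def)
    qed
  qed
  then show ?thesis by (rule C.final_loc)
qed

end
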